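(* Let $n\ge 2$ be an integer, $\rho\in\mathbb{C}$, and let $K_n(\rho)=\left[\rho^{|j-k|}\right]_{j,k=1}^n$ (with the convention $\rho^0=1$, so $K_n(0)=I_n$). Then: (i) all entries of $K_n(\rho)$ are positive iff $\rho>0$; (ii) $K_n(\rho)$ is real symmetric iff $\rho\in\mathbb{R}$; (iii) $K_n(\rho)$ is Hermitian iff $\rho\in\mathbb{R}$; (iv) the symbol of the corresponding Laurent matrix, i.e. the Fourier series $\sum_{k=-\infty}^{\infty}\rho^{|k|}e^{ik\theta}$ ($\theta\in\mathbb{R}$), is a well-defined and bounded function of $\theta$ iff $|\rho|<1$; (v) $K_n(\rho)$ is positive definite iff $-1<\rho<1$, and $K_n(\rho)$ is positive semidefinite iff $-1\le\rho\le 1$; (vi) $K_n(\rho)$ is normal iff ($\rho\in\mathbb{R}$ or $n=2$); (vii) $K_n(\rho)$ is a Green's matrix iff $\rho\in\mathbb{R}\setminus\{0\}$; (viii) $K_n(\rho)$ is totally positive iff $0\le\rho\le 1$; (ix) $K_n(\rho)$ is oscillatory iff $0<\rho<1$.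
   Context: A complex $n\times n$ matrix $A$ is positive definite (positive semidefinite) if $x^*Ax>0$ ($x^*Ax\ge 0$) for all nonzero $x\in\mathbb{C}^n$. A real $n\times n$ matrix $A=[A_{jk}]$ is a Green's matrix if there exist real numbers $\alpha_1,\dots,\alpha_n,\beta_1,\dots,\beta_n$ with $A_{jk}=\alpha_j\beta_k$ for $1\le j\le k\le n$ and $A_{jk}=\alpha_k\beta_j$ for $1\le k\le j\le n$. A (real) matrix is totally positive if every minor is nonnegative. A totally positive square matrix is oscillatory if some positive integer power of it has all minors strictly positive. *)

theory Defs
  imports Complex_Main "Jordan_Normal_Form.Determinant" "Jordan_Normal_Form.DL_Submatrix"
begin

(* Indices are 0-based: entry (j,k) with j,k < n corresponds to (j+1,k+1) in the paper. *)

definition kms_mat :: "nat \<Rightarrow> complex \<Rightarrow> complex mat" where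
  "kms_mat n \<rho> = mat n n (\<lambda>(j,k). \<rho> ^ (if j \<le> k then k - j else j - k))"
  (* note 0 ^ 0 = 1 in Isabelle, matching the convention rho^0 = 1 *)

definition pos_c :: "complex \<Rightarrow> bool" where
  "pos_c z \<longleftrightarrow> z \<in> \<real> \<and> Re z > 0"

definition nonneg_c :: "complex \<Rightarrow> bool" where
  "nonneg_c z \<longleftrightarrow> z \<in> \<real> \<and> Re z \<ge> 0"

definition all_entries_positive :: "complex mat \<Rightarrow> bool" where
  "all_entries_positive A \<longleftrightarrow> (\<forall>j<dim_row A. \<forall>k<dim_col A. pos_c (A $$ (j,k)))"

definition real_mat :: "complex mat \<Rightarrow> bool" where
  "real_mat A \<longleftrightarrow> (\<forall>j<dim_row A. \<forall>k<dim_col A. A $$ (j,k) \<in> \<real>)"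

definition real_symmetric :: "complex mat \<Rightarrow> bool" where
  "real_symmetric A \<longleftrightarrow> real_mat A \<and> transpose_mat A = A"

definition adjoint_mat :: "complex mat \<Rightarrow> complex mat" where
  "adjoint_mat A = mat (dim_col A) (dim_row A) (\<lambda>(i,j). cnj (A $$ (j,i)))"

definition hermitian :: "complex mat \<Rightarrow> bool" where
  "hermitian A \<longleftrightarrow> adjoint_mat A = A"

definition normal_mat :: "complex mat \<Rightarrow> bool" where
  "normal_mat A \<longleftrightarrow> A * adjoint_mat A = adjoint_mat A * A"

definition quad_form :: "complex mat \<Rightarrow> complex vec \<Rightarrow> complex" where
  "quad_form A x = (\<Sum>j<dim_row A. \<Sum>k<dim_col A. cnj (x $ j) * A $$ (j,k) * x $ k)"

definition positive_definite :: "complex mat \<Rightarrow> bool" where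
  "positive_definite A \<longleftrightarrow> A \<in> carrier_mat (dim_row A) (dim_row A) \<and>
     (\<forall>x \<in> carrier_vec (dim_row A). x \<noteq> 0\<^sub>v (dim_row A) \<longrightarrow> pos_c (quad_form A x))"

definition positive_semidefinite :: "complex mat \<Rightarrow> bool" where
  "positive_semidefinite A \<longleftrightarrow> A \<in> carrier_mat (dim_row A) (dim_row A) \<and>
     (\<forall>x \<in> carrier_vec (dim_row A). x \<noteq> 0\<^sub>v (dim_row A) \<longrightarrow> nonneg_c (quad_form A x))"

definition greens_matrix :: "complex mat \<Rightarrow> bool" where
  "greens_matrix A \<longleftrightarrow> A \<in> carrier_mat (dim_row A) (dim_row A) \<and> real_mat A \<and>
     (\<exists>\<alpha> \<beta> :: nat \<Rightarrow> real. \<forall>j<dim_row A. \<forall>k<dim_row A.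
        (j \<le> k \<longrightarrow> A $$ (j,k) = complex_of_real (\<alpha> j * \<beta> k)) \<and>
        (k \<le> j \<longrightarrow> A $$ (j,k) = complex_of_real (\<alpha> k * \<beta> j)))"

definition all_minors :: "(complex \<Rightarrow> bool) \<Rightarrow> complex mat \<Rightarrow> bool" where
  "all_minors P A \<longleftrightarrow> (\<forall>I J. I \<subseteq> {..<dim_row A} \<longrightarrow> J \<subseteq> {..<dim_col A} \<longrightarrow>
      I \<noteq> {} \<longrightarrow> card I = card J \<longrightarrow> P (det (submatrix A I J)))"

definition totally_positive :: "complex mat \<Rightarrow> bool" where
  "totally_positive A \<longleftrightarrow> real_mat A \<and> all_minors nonneg_c A"

definition oscillatory :: "complex mat \<Rightarrow> bool" where
  "oscillatory A \<longleftrightarrow> A \<in> carrier_mat (dim_row A) (dim_row A) \<and> totally_positive A \<and>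
     (\<exists>m>0. all_minors pos_c (A ^\<^sub>m m))"

definition symbol_partial :: "complex \<Rightarrow> real \<Rightarrow> nat \<Rightarrow> complex" where
  "symbol_partial \<rho> \<theta> N = (\<Sum>k = - int N..int N. \<rho> ^ nat \<bar>k\<bar> * exp (\<i> * of_int k * of_real \<theta>))"

definition symbol_well_defined_bounded :: "complex \<Rightarrow> bool" where
  "symbol_well_defined_bounded \<rho> \<longleftrightarrow>
     (\<forall>\<theta>. convergent (symbol_partial \<rho> \<theta>)) \<and>
     (\<exists>B. \<forall>\<theta>. norm (lim (symbol_partial \<rho> \<theta>)) \<le> B)"

end

theory Submission
  imports Defs
begin


definition inc_fun :: "nat \<Rightarrow> nat \<Rightarrow> (nat \<Rightarrow> nat) set" where
  "inc_fun p n = {\<kappa> \<in> Pi\<^sub>E {0..<p} (\<lambda>_. {..<n}). \<forall>a b. a < b \<longrightarrow> b < p \<longrightarrow> \<kappa> a < \<kappa> b}"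

lemma finite_inc_fun: "finite (inc_fun p n)"
proof -
  have "inc_fun p n \<subseteq> Pi\<^sub>E {0..<p} (\<lambda>_. {..<n})" unfolding inc_fun_def by auto
  thus ?thesis by (rule finite_subset) (auto intro: finite_PiE)
qed

lemma inc_sorted_list:
  assumes "\<forall>a b. a < b \<longrightarrow> b < p \<longrightarrow> \<kappa> a < (\<kappa> b :: nat)"
  shows "sorted_list_of_set (\<kappa> ` {0..<p}) = map \<kappa> [0..<p]"
proof -
  have sw: "sorted_wrt (<) (map \<kappa> [0..<p])"
    unfolding sorted_wrt_iff_nth_less using assms by auto
  have "sorted (map \<kappa> [0..<p])" "distinct (map \<kappa> [0..<p])"
    using sw by (auto simp: strict_sorted_iff)
  hence "sorted_list_of_set (set (map \<kappa> [0..<p])) = map \<kappa> [0..<p]"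
    by (rule sorted_list_of_set.idem_if_sorted_distinct)
  thus ?thesis by simp
qed


lemma inc_fun_D:
  assumes "\<kappa> \<in> inc_fun p n"
  shows "\<And>a b. a < b \<Longrightarrow> b < p \<Longrightarrow> \<kappa> a < \<kappa> b" "\<And>a. a < p \<Longrightarrow> \<kappa> a < n"
    "\<And>a. \<not> a < p \<Longrightarrow> \<kappa> a = undefined"
proof -
  have 1: "\<kappa> \<in> Pi\<^sub>E {0..<p} (\<lambda>_. {..<n})" and 2: "\<forall>a b. a < b \<longrightarrow> b < p \<longrightarrow> \<kappa> a < \<kappa> b"
    using assms unfolding inc_fun_def by simp_all
  show "\<And>a b. a < b \<Longrightarrow> b < p \<Longrightarrow> \<kappa> a < \<kappa> b" using 2 by simp
  show "\<And>a. a < p \<Longrightarrow> \<kappa> a < n" using 1 by (simp add: PiE_iff)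
  show "\<And>a. \<not> a < p \<Longrightarrow> \<kappa> a = undefined" using 1 by (simp add: PiE_iff extensional_def)
qed

lemma inc_fun_inj: assumes "\<kappa> \<in> inc_fun p n" "a < p" "b < p" "\<kappa> a = \<kappa> b" shows "a = b"
  using inc_fun_D(1)[OF assms(1), of a b] inc_fun_D(1)[OF assms(1), of b a] assms(2-4)
  by (cases a b rule: linorder_cases) auto

lemma inc_unique:
  assumes "\<kappa> \<in> inc_fun p n" "\<kappa>' \<in> inc_fun p n" "\<kappa> ` {0..<p} = \<kappa>' ` {0..<p}"
  shows "\<kappa> = \<kappa>'"
proof -
  have "map \<kappa> [0..<p] = map \<kappa>' [0..<p]"
    using inc_sorted_list[of p \<kappa>] inc_sorted_list[of p \<kappa>'] assms(3) inc_fun_D(1)[OF assms(1)] inc_fun_D(1)[OF assms(2)]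
    by metis
  hence eq: "\<forall>a<p. \<kappa> a = \<kappa>' a" by (simp add: map_eq_conv)
  show ?thesis
  proof
    fix a show "\<kappa> a = \<kappa>' a"
      using eq inc_fun_D(3)[OF assms(1)] inc_fun_D(3)[OF assms(2)] by (cases "a < p") auto
  qed
qed

lemma inj_decomp:
  assumes f: "f \<in> Pi\<^sub>E {0..<p} (\<lambda>_. {..<n::nat})" and inj: "inj_on f {0..<p}"
  shows "\<exists>\<kappa>\<in>inc_fun p n. \<exists>\<tau>. \<tau> permutes {0..<p} \<and> f = restrict (\<kappa> \<circ> \<tau>) {0..<p}"
proof -
  define U where "U = {0..<p}"
  define L where "L = sorted_list_of_set (f ` U)"
  have fin: "finite (f ` U)" unfolding U_def by auto
  have lenL: "length L = p" unfolding L_def using inj by (simp add: card_image U_def)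
  have setL: "set L = f ` U" unfolding L_def using fin by simp
  have swL: "sorted_wrt (<) L" unfolding L_def by (rule strict_sorted_list_of_set)
  define \<kappa> where "\<kappa> = restrict (\<lambda>a. L ! a) U"
  have kin: "\<kappa> \<in> inc_fun p n"
  proof -
    have "\<kappa> a < n" if "a < p" for a
    proof -
      have "L ! a \<in> set L" using that lenL by simp
      then obtain b where "b \<in> U" "L ! a = f b" using setL by auto
      moreover have "f b < n" using f \<open>b \<in> U\<close> unfolding U_def by (simp add: PiE_iff)
      ultimately show ?thesis using that unfolding \<kappa>_def U_def by simp
    qed
    moreover have "\<kappa> a < \<kappa> b" if "a < b" "b < p" for a b
    proof -
      have "L ! a < L ! b" using swL that lenL unfolding sorted_wrt_iff_nth_less by simp
      thus ?thesis using that unfolding \<kappa>_def U_def by simp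
    qed
    moreover have "\<kappa> \<in> extensional {0..<p}" unfolding \<kappa>_def U_def by simp
    ultimately show ?thesis unfolding inc_fun_def PiE_iff by simp
  qed
  have kimg: "\<kappa> ` U = f ` U"
  proof -
    have "\<kappa> ` U = (\<lambda>a. L ! a) ` {0..<length L}" unfolding \<kappa>_def U_def lenL by auto
    also have "\<dots> = set L" by (auto simp: set_conv_nth)
    finally show ?thesis using setL by simp
  qed
  have kinj: "inj_on \<kappa> U"
  proof
    fix a b assume "a \<in> U" "b \<in> U" "\<kappa> a = \<kappa> b"
    thus "a = b" using inc_fun_inj[OF kin] unfolding U_def by simp
  qed
  have kbij: "bij_betw \<kappa> U (f ` U)" using kinj kimg by (simp add: bij_betw_def)
  have fbij: "bij_betw f U (f ` U)" using inj U_def by (simp add: bij_betw_def)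
  define \<tau> where "\<tau> = (\<lambda>a. if a \<in> U then inv_into U \<kappa> (f a) else a)"
  have tbij: "bij_betw \<tau> U U"
  proof -
    have b: "bij_betw (inv_into U \<kappa> \<circ> f) U U"
      by (rule bij_betw_trans[OF fbij bij_betw_inv_into[OF kbij]])
    have "\<And>a. a\<in>U \<Longrightarrow> \<tau> a = (inv_into U \<kappa> \<circ> f) a" unfolding \<tau>_def by simp
    hence "bij_betw \<tau> U U = bij_betw (inv_into U \<kappa> \<circ> f) U U" by (rule bij_betw_cong)
    thus ?thesis using b by simp
  qed
  have tperm: "\<tau> permutes U" by (rule bij_imp_permutes[OF tbij]) (auto simp: \<tau>_def)
  have "f = restrict (\<kappa> \<circ> \<tau>) U"
  proof
    fix a show "f a = restrict (\<kappa> \<circ> \<tau>) U a"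
    proof (cases "a \<in> U")
      case True
      have "f a \<in> \<kappa> ` U" using kimg True by auto
      thus ?thesis using True unfolding \<tau>_def by (simp add: f_inv_into_f)
    next
      case False
      hence "f a = undefined" using f unfolding U_def by (simp add: PiE_iff extensional_def)
      thus ?thesis using False by simp
    qed
  qed
  thus ?thesis using kin tperm unfolding U_def by blast
qed


lemma cauchy_binet_fun:
  fixes X Y :: "nat \<Rightarrow> nat \<Rightarrow> 'a::comm_ring_1"
  shows "det (mat p p (\<lambda>(a,b). \<Sum>k<n. X a k * Y k b)) =
    (\<Sum>\<kappa>\<in>inc_fun p n. det (mat p p (\<lambda>(a,t). X a (\<kappa> t))) * det (mat p p (\<lambda>(t,b). Y (\<kappa> t) b)))"
proof -
  define U where "U = {0..<p}"
  define P where "P = {\<sigma>. \<sigma> permutes U}"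
  define F where "F = Pi\<^sub>E U (\<lambda>_. {..<n})"
  define YF where "YF = (\<lambda>f. mat p p (\<lambda>(a,b). Y (f a) b))"
  define G where "G = (\<lambda>f. (\<Prod>a\<in>U. X a (f a)) * det (YF f))"
  have finP: "finite P" unfolding P_def U_def by (simp add: finite_permutations)
  have finF: "finite F" unfolding F_def U_def by (auto intro: finite_PiE)
  have "det (mat p p (\<lambda>(a,b). \<Sum>k<n. X a k * Y k b)) =
     (\<Sum>\<sigma>\<in>P. of_int (sign \<sigma>) * (\<Prod>a\<in>U. \<Sum>k<n. X a k * Y k (\<sigma> a)))"
    unfolding P_def U_def
    by (subst det_def'[of _ p]) (auto intro!: sum.cong prod.cong simp: permutes_in_image)
  also have "\<dots> = (\<Sum>\<sigma>\<in>P. of_int (sign \<sigma>) * (\<Sum>f\<in>F. \<Prod>a\<in>U. X a (f a) * Y (f a) (\<sigma> a)))"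
    unfolding F_def U_def by (subst prod_sum_PiE) auto
  also have "\<dots> = (\<Sum>\<sigma>\<in>P. \<Sum>f\<in>F. (\<Prod>a\<in>U. X a (f a)) * (of_int (sign \<sigma>) * (\<Prod>a\<in>U. Y (f a) (\<sigma> a))))"
    by (simp add: sum_distrib_left prod.distrib mult.left_commute)
  also have "\<dots> = (\<Sum>f\<in>F. \<Sum>\<sigma>\<in>P. (\<Prod>a\<in>U. X a (f a)) * (of_int (sign \<sigma>) * (\<Prod>a\<in>U. Y (f a) (\<sigma> a))))"
    by (rule sum.swap)
  also have "\<dots> = (\<Sum>f\<in>F. G f)"
  proof (rule sum.cong[OF refl])
    fix f assume "f \<in> F"
    have "det (YF f) = (\<Sum>\<sigma>\<in>P. of_int (sign \<sigma>) * (\<Prod>a\<in>U. Y (f a) (\<sigma> a)))"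
      unfolding YF_def P_def U_def
      by (subst det_def'[of _ p]) (auto intro!: sum.cong prod.cong simp: permutes_in_image)
    thus "(\<Sum>\<sigma>\<in>P. (\<Prod>a\<in>U. X a (f a)) * (of_int (sign \<sigma>) * (\<Prod>a\<in>U. Y (f a) (\<sigma> a)))) = G f"
      unfolding G_def by (simp add: sum_distrib_left)
  qed
  also have "\<dots> = (\<Sum>f\<in>{f\<in>F. inj_on f U}. G f)"
  proof (rule sum.mono_neutral_right[OF finF])
    show "{f \<in> F. inj_on f U} \<subseteq> F" by auto
    show "\<forall>f\<in>F - {f \<in> F. inj_on f U}. G f = 0"
    proof
      fix f assume "f \<in> F - {f \<in> F. inj_on f U}"
      then obtain i j where ij: "i \<in> U" "j \<in> U" "i \<noteq> j" "f i = f j"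
        unfolding inj_on_def by auto
      have "det (YF f) = 0"
        by (rule det_identical_rows[of _ p i j]) (use ij in \<open>auto simp: YF_def U_def\<close>)
      thus "G f = 0" unfolding G_def by simp
    qed
  qed
  also have "{f\<in>F. inj_on f U} = (\<lambda>(\<kappa>,\<tau>). restrict (\<kappa> \<circ> \<tau>) U) ` (Sigma (inc_fun p n) (\<lambda>_. P))"
  proof
    show "{f\<in>F. inj_on f U} \<subseteq> (\<lambda>(\<kappa>,\<tau>). restrict (\<kappa> \<circ> \<tau>) U) ` (Sigma (inc_fun p n) (\<lambda>_. P))"
    proof
      fix f assume "f \<in> {f\<in>F. inj_on f U}"
      then obtain \<kappa> \<tau> where "\<kappa> \<in> inc_fun p n" "\<tau> permutes U" "f = restrict (\<kappa> \<circ> \<tau>) U"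
        using inj_decomp[of f p n] unfolding F_def U_def by auto
      thus "f \<in> (\<lambda>(\<kappa>,\<tau>). restrict (\<kappa> \<circ> \<tau>) U) ` (Sigma (inc_fun p n) (\<lambda>_. P))"
        unfolding P_def by auto
    qed
    show "(\<lambda>(\<kappa>,\<tau>). restrict (\<kappa> \<circ> \<tau>) U) ` (Sigma (inc_fun p n) (\<lambda>_. P)) \<subseteq> {f\<in>F. inj_on f U}"
    proof (rule image_subsetI)
      fix x assume "x \<in> Sigma (inc_fun p n) (\<lambda>_. P)"
      then obtain \<kappa> \<tau> where x: "x = (\<kappa>,\<tau>)" and k: "\<kappa> \<in> inc_fun p n" and t: "\<tau> \<in> P" by auto
      have tU: "\<tau> a \<in> U" if "a \<in> U" for a using t that unfolding P_def by (simp add: permutes_in_image)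
      have "restrict (\<kappa> \<circ> \<tau>) U \<in> F"
        unfolding F_def PiE_iff
      proof (intro conjI ballI)
        fix a assume "a \<in> U" thus "restrict (\<kappa> \<circ> \<tau>) U a \<in> {..<n}"
          using tU[of a] inc_fun_D(2)[OF k, of "\<tau> a"] unfolding U_def by simp
      qed simp
      moreover have "inj_on (restrict (\<kappa> \<circ> \<tau>) U) U"
      proof
        fix a b assume ab: "a \<in> U" "b \<in> U" "restrict (\<kappa> \<circ> \<tau>) U a = restrict (\<kappa> \<circ> \<tau>) U b"
        hence "\<kappa> (\<tau> a) = \<kappa> (\<tau> b)" by simp
        hence "\<tau> a = \<tau> b" using tU[OF ab(1)] tU[OF ab(2)] inc_fun_inj[OF k, of "\<tau> a" "\<tau> b"] unfolding U_def by simp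
        thus "a = b" using t unfolding P_def using permutes_inj[of \<tau> U] by (simp add: inj_eq)
      qed
      ultimately show "(\<lambda>(\<kappa>,\<tau>). restrict (\<kappa> \<circ> \<tau>) U) x \<in> {f\<in>F. inj_on f U}" using x by simp
    qed
  qed
  also have "sum G ((\<lambda>(\<kappa>,\<tau>). restrict (\<kappa> \<circ> \<tau>) U) ` (Sigma (inc_fun p n) (\<lambda>_. P))) =
      (\<Sum>(\<kappa>,\<tau>)\<in>Sigma (inc_fun p n) (\<lambda>_. P). G (restrict (\<kappa> \<circ> \<tau>) U))"
  proof (subst sum.reindex)
    show "inj_on (\<lambda>(\<kappa>,\<tau>). restrict (\<kappa> \<circ> \<tau>) U) (Sigma (inc_fun p n) (\<lambda>_. P))"
    proof (rule inj_onI, clarify)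
      fix \<kappa> \<tau> \<kappa>' \<tau>'
      assume k: "\<kappa> \<in> inc_fun p n" and t: "\<tau> \<in> P" and k': "\<kappa>' \<in> inc_fun p n" and t': "\<tau>' \<in> P"
        and eq: "restrict (\<kappa> \<circ> \<tau>) U = restrict (\<kappa>' \<circ> \<tau>') U"
      have tU: "\<tau> ` U = U" "\<tau>' ` U = U" using t t' unfolding P_def by (auto simp: permutes_image)
      have "\<kappa> ` U = (\<kappa> \<circ> \<tau>) ` U" using tU(1) by (metis image_comp)
      also have "\<dots> = restrict (\<kappa> \<circ> \<tau>) U ` U" by auto
      also have "\<dots> = restrict (\<kappa>' \<circ> \<tau>') U ` U" using eq by simp
      also have "\<dots> = (\<kappa>' \<circ> \<tau>') ` U" by auto
      also have "\<dots> = \<kappa>' ` U" using tU(2) by (metis image_comp)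
      finally have kk: "\<kappa> = \<kappa>'" using inc_unique[OF k k'] unfolding U_def by simp
      have "\<tau> a = \<tau>' a" for a
      proof (cases "a \<in> U")
        case True
        have "\<tau> a \<in> U" "\<tau>' a \<in> U" using tU True by auto
        moreover have "\<kappa> (\<tau> a) = \<kappa> (\<tau>' a)" using fun_cong[OF eq, of a] True kk by simp
        ultimately show ?thesis using inc_fun_inj[OF k, of "\<tau> a" "\<tau>' a"] unfolding U_def by simp
      next
        case False
        thus ?thesis using t t' unfolding P_def by (simp add: permutes_not_in)
      qed
      thus "\<kappa> = \<kappa>' \<and> \<tau> = \<tau>'" using kk by auto
    qed
  qed (simp add: case_prod_beta)
  also have "\<dots> = (\<Sum>\<kappa>\<in>inc_fun p n. \<Sum>\<tau>\<in>P. G (restrict (\<kappa> \<circ> \<tau>) U))"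
    by (rule sum.Sigma[symmetric]) (use finP finite_inc_fun in auto)
  also have "\<dots> = (\<Sum>\<kappa>\<in>inc_fun p n. det (mat p p (\<lambda>(a,t). X a (\<kappa> t))) * det (mat p p (\<lambda>(t,b). Y (\<kappa> t) b)))"
  proof (rule sum.cong[OF refl])
    fix \<kappa> assume k: "\<kappa> \<in> inc_fun p n"
    have "G (restrict (\<kappa> \<circ> \<tau>) U) = (of_int (sign \<tau>) * (\<Prod>a\<in>U. X a (\<kappa> (\<tau> a)))) * det (mat p p (\<lambda>(t,b). Y (\<kappa> t) b))"
      if t: "\<tau> \<in> P" for \<tau>
    proof -
      have tp: "\<tau> permutes {0..<p}" using t unfolding P_def U_def by simp
      have tU: "\<tau> a < p" if "a < p" for a using tp that by (simp add: permutes_in_image)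
      have "YF (restrict (\<kappa> \<circ> \<tau>) U) = mat p p (\<lambda>(i,j). mat p p (\<lambda>(t,b). Y (\<kappa> t) b) $$ (\<tau> i, j))"
        unfolding YF_def U_def by (rule eq_matI) (auto simp: tU)
      hence "det (YF (restrict (\<kappa> \<circ> \<tau>) U)) = of_int (sign \<tau>) * det (mat p p (\<lambda>(t,b). Y (\<kappa> t) b))"
        using det_permute_rows[OF _ tp, of "mat p p (\<lambda>(t,b). Y (\<kappa> t) b)"] by simp
      moreover have "(\<Prod>a\<in>U. X a (restrict (\<kappa> \<circ> \<tau>) U a)) = (\<Prod>a\<in>U. X a (\<kappa> (\<tau> a)))"
        by (rule prod.cong) auto
      ultimately show ?thesis unfolding G_def by (simp add: ac_simps)
    qed
    hence "(\<Sum>\<tau>\<in>P. G (restrict (\<kappa> \<circ> \<tau>) U)) =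
       (\<Sum>\<tau>\<in>P. of_int (sign \<tau>) * (\<Prod>a\<in>U. X a (\<kappa> (\<tau> a)))) * det (mat p p (\<lambda>(t,b). Y (\<kappa> t) b))"
      by (simp add: sum_distrib_right)
    also have "(\<Sum>\<tau>\<in>P. of_int (sign \<tau>) * (\<Prod>a\<in>U. X a (\<kappa> (\<tau> a)))) = det (mat p p (\<lambda>(a,t). X a (\<kappa> t)))"
      unfolding P_def U_def
      by (subst det_def'[of _ p]) (auto intro!: sum.cong prod.cong simp: permutes_in_image)
    finally show "(\<Sum>\<tau>\<in>P. G (restrict (\<kappa> \<circ> \<tau>) U)) = det (mat p p (\<lambda>(a,t). X a (\<kappa> t))) * det (mat p p (\<lambda>(t,b). Y (\<kappa> t) b))" .
  qed
  finally show ?thesis .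
qed


definition dd :: "nat \<Rightarrow> nat \<Rightarrow> nat" where
  "dd j k = (if j \<le> k then k - j else j - k)"

lemma dd_sym: "dd j k = dd k j" unfolding dd_def by auto

definition Mk :: "real \<Rightarrow> nat \<Rightarrow> (nat \<Rightarrow> nat) \<Rightarrow> (nat \<Rightarrow> nat) \<Rightarrow> real mat" where
  "Mk r p i j = mat p p (\<lambda>(a,b). r ^ dd (i a) (j b))"

definition incr :: "nat \<Rightarrow> (nat \<Rightarrow> nat) \<Rightarrow> bool" where
  "incr p i \<longleftrightarrow> (\<forall>a b. a < b \<longrightarrow> b < p \<longrightarrow> i a < i b)"

lemma incr_Suc: "incr (Suc q) i \<Longrightarrow> incr q (i \<circ> Suc)"
  unfolding incr_def by simp

lemma Mk_carrier: "Mk r p i j \<in> carrier_mat p p" unfolding Mk_def by simp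

lemma Mk_transpose: "transpose_mat (Mk r p i j) = Mk r p j i"
  unfolding Mk_def by (rule eq_matI) (auto simp: dd_sym)

lemma det_Mk_swap: "det (Mk r p i j) = det (Mk r p j i)"
  using det_transpose[OF Mk_carrier[of r p i j]] Mk_transpose[of r p i j] by simp

lemma det_Mk_1: "det (Mk r (Suc 0) i j) = r ^ dd (i 0) (j 0)"
  by (subst det_single) (auto simp: Mk_def)

lemma det_Mk_0: "det (Mk r 0 i j) = 1"
  by (simp add: Mk_def)

lemma entry_calc:
  fixes r :: real
  assumes "i0 < i1"
  shows "r ^ dd i0 j0 - r ^ (i1 - i0) * r ^ dd i1 j0 =
     (if j0 \<le> i1 then r ^ dd i0 j0 * (1 - r ^ (2 * (i1 - max i0 j0))) else 0)"
proof (cases "j0 \<le> i1")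
  case True
  show ?thesis
  proof (cases "i0 \<le> j0")
    case True2: True
    obtain a b where ab: "j0 = i0 + a" "i1 = j0 + b" using True True2 le_Suc_ex by metis
    have e: "dd i0 j0 = a" "i1 - i0 = a + b" "dd i1 j0 = b" "i1 - max i0 j0 = b"
      using ab by (auto simp: dd_def)
    have h: "r ^ (2*b) = r^b * r^b" by (simp add: mult_2 power_add)
    have "r ^ a - r ^ (a + b) * r ^ b = r ^ a * (1 - r ^ (2 * b))"
      unfolding h by (simp add: power_add right_diff_distrib mult.assoc)
    thus ?thesis using True by (simp only: e if_True)
  next
    case False2: False
    obtain a b where ab: "i0 = j0 + a" "i1 = i0 + b" using assms False2 le_Suc_ex
      by (metis less_imp_le nat_le_linear)
    have e: "dd i0 j0 = a" "i1 - i0 = b" "dd i1 j0 = a + b" "i1 - max i0 j0 = b"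
      using ab False2 by (auto simp: dd_def)
    have h: "r ^ (2*b) = r^b * r^b" by (simp add: mult_2 power_add)
    have "r ^ a - r ^ b * r ^ (a + b) = r ^ a * (1 - r ^ (2 * b))"
      unfolding h by (simp add: power_add right_diff_distrib mult.assoc mult.left_commute)
    thus ?thesis using True by (simp only: e if_True)
  qed
next
  case False
  obtain a b where ab: "i1 = i0 + a" "j0 = i1 + b" using assms False le_Suc_ex
    by (metis less_imp_le nat_le_linear)
  have e: "dd i0 j0 = a + b" "i1 - i0 = a" "dd i1 j0 = b"
    using ab by (auto simp: dd_def)
  show ?thesis using False by (simp add: e power_add)
qed

lemma det_Mk_rec_half:
  assumes i: "incr (Suc (Suc q)) i" and j: "incr (Suc (Suc q)) j" and le: "i 1 \<le> j 1"
  shows "det (Mk r (Suc (Suc q)) i j) =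
    (if j 0 \<le> i 1 then r ^ dd (i 0) (j 0) * (1 - r ^ (2 * (i 1 - max (i 0) (j 0)))) else 0)
      * det (Mk r (Suc q) (i \<circ> Suc) (j \<circ> Suc))"
proof -
  define p where "p = Suc (Suc q)"
  define A where "A = Mk r p i j"
  define c where "c = r ^ (i 1 - i 0)"
  define A' where "A' = addrow (- c) 0 1 A"
  have A: "A \<in> carrier_mat p p" unfolding A_def by (rule Mk_carrier)
  have A': "A' \<in> carrier_mat p p" unfolding A'_def using A by simp
  have i01: "i 0 < i 1" using i unfolding incr_def by simp
  have "det A = det A'" unfolding A'_def by (rule det_addrow[OF _ _ A, symmetric]) (auto simp: p_def)
  also have "\<dots> = (\<Sum>b<p. A' $$ (0,b) * cofactor A' 0 b)"
    by (rule laplace_expansion_row[OF A']) (simp add: p_def)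
  also have "\<dots> = A' $$ (0,0) * cofactor A' 0 0 + (\<Sum>b<Suc q. A' $$ (0, Suc b) * cofactor A' 0 (Suc b))"
    unfolding p_def by (rule sum.lessThan_Suc_shift)
  also have "(\<Sum>b<Suc q. A' $$ (0, Suc b) * cofactor A' 0 (Suc b)) = 0"
  proof (rule sum.neutral, rule ballI)
    fix b assume b: "b \<in> {..<Suc q}"
    have jb: "j 1 \<le> j (Suc b)" using j b unfolding incr_def
      by (cases b) (auto simp: less_imp_le)
    have "A' $$ (0, Suc b) = - c * r ^ dd (i 1) (j (Suc b)) + r ^ dd (i 0) (j (Suc b))"
      unfolding A'_def A_def Mk_def using b by (simp add: p_def)
    also have "\<dots> = 0"
    proof -
      obtain u v where uv: "i 1 = i 0 + u" "j (Suc b) = i 1 + v" using i01 jb le le_Suc_ex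
        by (metis less_imp_le order_trans)
      show ?thesis using uv unfolding c_def by (simp add: dd_def power_add)
    qed
    finally show "A' $$ (0, Suc b) * cofactor A' 0 (Suc b) = 0" by simp
  qed
  also have "A' $$ (0,0) = (if j 0 \<le> i 1 then r ^ dd (i 0) (j 0) * (1 - r ^ (2 * (i 1 - max (i 0) (j 0)))) else 0)"
  proof -
    have "A' $$ (0,0) = r ^ dd (i 0) (j 0) - r ^ (i 1 - i 0) * r ^ dd (i 1) (j 0)"
      unfolding A'_def A_def Mk_def c_def by (simp add: p_def)
    thus ?thesis using entry_calc[OF i01, of r "j 0"] by simp
  qed
  also have "cofactor A' 0 0 = det (Mk r (Suc q) (i \<circ> Suc) (j \<circ> Suc))"
  proof -
    have "mat_delete A' 0 0 = Mk r (Suc q) (i \<circ> Suc) (j \<circ> Suc)"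
      unfolding mat_delete_def A'_def A_def Mk_def p_def by (rule eq_matI) auto
    thus ?thesis unfolding cofactor_def by simp
  qed
  finally show ?thesis unfolding A_def p_def by simp
qed

definition Fk :: "real \<Rightarrow> nat \<Rightarrow> nat \<Rightarrow> nat \<Rightarrow> nat \<Rightarrow> real" where
  "Fk r i0 j0 i1 j1 = (if max i0 j0 \<le> min i1 j1 then r ^ dd i0 j0 * (1 - r ^ (2 * (min i1 j1 - max i0 j0))) else 0)"

lemma det_Mk_rec:
  assumes i: "incr (Suc (Suc q)) i" and j: "incr (Suc (Suc q)) j"
  shows "det (Mk r (Suc (Suc q)) i j) = Fk r (i 0) (j 0) (i 1) (j 1) * det (Mk r (Suc q) (i \<circ> Suc) (j \<circ> Suc))"
proof -
  have i01: "i 0 < i 1" using i unfolding incr_def by simp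
  have j01: "j 0 < j 1" using j unfolding incr_def by simp
  show ?thesis
  proof (cases "i 1 \<le> j 1")
    case True
    have "(if j 0 \<le> i 1 then r ^ dd (i 0) (j 0) * (1 - r ^ (2 * (i 1 - max (i 0) (j 0)))) else 0)
        = Fk r (i 0) (j 0) (i 1) (j 1)"
      unfolding Fk_def using True i01 by (auto simp: min_def max_def)
    thus ?thesis using det_Mk_rec_half[OF i j True] by simp
  next
    case False
    hence le: "j 1 \<le> i 1" by simp
    have "det (Mk r (Suc (Suc q)) i j) = det (Mk r (Suc (Suc q)) j i)" by (rule det_Mk_swap)
    also have "\<dots> = (if i 0 \<le> j 1 then r ^ dd (j 0) (i 0) * (1 - r ^ (2 * (j 1 - max (j 0) (i 0)))) else 0)
      * det (Mk r (Suc q) (j \<circ> Suc) (i \<circ> Suc))" by (rule det_Mk_rec_half[OF j i le])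
    also have "(if i 0 \<le> j 1 then r ^ dd (j 0) (i 0) * (1 - r ^ (2 * (j 1 - max (j 0) (i 0)))) else 0)
        = Fk r (i 0) (j 0) (i 1) (j 1)"
      unfolding Fk_def using le j01 by (auto simp: min_def max_def dd_sym)
    also have "det (Mk r (Suc q) (j \<circ> Suc) (i \<circ> Suc)) = det (Mk r (Suc q) (i \<circ> Suc) (j \<circ> Suc))"
      by (rule det_Mk_swap)
    finally show ?thesis .
  qed
qed

lemma det_Mk_nonneg:
  assumes "0 \<le> r" "r \<le> 1" "incr p i" "incr p j"
  shows "det (Mk r p i j) \<ge> 0"
  using assms(3,4)
proof (induction p arbitrary: i j rule: nat_less_induct)
  case (1 p)
  show ?case
  proof (cases p)
    case 0 thus ?thesis by (simp add: det_Mk_0)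
  next
    case (Suc q)
    show ?thesis
    proof (cases q)
      case 0 thus ?thesis using Suc assms by (simp add: det_Mk_1)
    next
      case (Suc q')
      have "Fk r (i 0) (j 0) (i 1) (j 1) \<ge> 0"
      proof -
        have "r ^ (2 * k) \<le> 1" for k using assms by (simp add: power_le_one)
        thus ?thesis unfolding Fk_def using assms by simp
      qed
      moreover have "det (Mk r (Suc q') (i \<circ> Suc) (j \<circ> Suc)) \<ge> 0"
        using 1(1)[rule_format, of "Suc q'" "i \<circ> Suc" "j \<circ> Suc"] \<open>p = Suc q\<close> Suc incr_Suc[OF 1(2)[unfolded \<open>p = Suc q\<close>]]
          incr_Suc[OF 1(3)[unfolded \<open>p = Suc q\<close>]] by simp
      ultimately show ?thesis using det_Mk_rec[of q' i j r] 1(2,3) \<open>p = Suc q\<close> Suc by simp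
    qed
  qed
qed

definition interl :: "nat \<Rightarrow> (nat \<Rightarrow> nat) \<Rightarrow> (nat \<Rightarrow> nat) \<Rightarrow> bool" where
  "interl p i j \<longleftrightarrow> (\<forall>a. Suc a < p \<longrightarrow> i a < j (Suc a) \<and> j a < i (Suc a))"

lemma det_Mk_pos:
  assumes "0 < r" "r < 1" "incr p i" "incr p j" "interl p i j"
  shows "det (Mk r p i j) > 0"
  using assms(3,4,5)
proof (induction p arbitrary: i j rule: nat_less_induct)
  case (1 p)
  show ?case
  proof (cases p)
    case 0 thus ?thesis by (simp add: det_Mk_0)
  next
    case (Suc q)
    show ?thesis
    proof (cases q)
      case 0 thus ?thesis using Suc assms by (simp add: det_Mk_1)
    next
      case (Suc q')
      have lt: "i 0 < i 1" "j 0 < j 1" "i 0 < j 1" "j 0 < i 1"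
        using 1(2,3,4) \<open>p = Suc q\<close> Suc unfolding incr_def interl_def by auto
      have "Fk r (i 0) (j 0) (i 1) (j 1) > 0"
      proof -
        have "r ^ (2 * k) < 1" if "k > 0" for k using assms that by (simp add: power_less_one_iff)
        hence "r ^ (2 * (min (i 1) (j 1) - max (i 0) (j 0))) < 1" using lt by simp
        thus ?thesis unfolding Fk_def using assms lt by simp
      qed
      moreover have "interl (Suc q') (i \<circ> Suc) (j \<circ> Suc)"
        using 1(4) \<open>p = Suc q\<close> Suc unfolding interl_def by simp
      hence "det (Mk r (Suc q') (i \<circ> Suc) (j \<circ> Suc)) > 0"
        using 1(1)[rule_format, of "Suc q'" "i \<circ> Suc" "j \<circ> Suc"] \<open>p = Suc q\<close> Suc incr_Suc[OF 1(2)[unfolded \<open>p = Suc q\<close>]]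
          incr_Suc[OF 1(3)[unfolded \<open>p = Suc q\<close>]] by simp
      ultimately show ?thesis using det_Mk_rec[of q' i j r] 1(2,3) \<open>p = Suc q\<close> Suc by simp
    qed
  qed
qed


definition minor :: "real mat \<Rightarrow> nat \<Rightarrow> (nat \<Rightarrow> nat) \<Rightarrow> (nat \<Rightarrow> nat) \<Rightarrow> real" where
  "minor B p i j = det (mat p p (\<lambda>(a,b). B $$ (i a, j b)))"

definition Rk :: "real \<Rightarrow> nat \<Rightarrow> real mat" where
  "Rk r n = mat n n (\<lambda>(j,k). r ^ dd j k)"

definition vals :: "nat \<Rightarrow> nat \<Rightarrow> (nat \<Rightarrow> nat) \<Rightarrow> bool" where
  "vals p n i \<longleftrightarrow> (\<forall>a<p. i a < n)"

lemma minor_cong: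
  assumes "\<And>a. a < p \<Longrightarrow> i a = i' a" "\<And>a. a < p \<Longrightarrow> j a = j' a"
  shows "minor B p i j = minor B p i' j'"
  unfolding minor_def using assms by (intro arg_cong[where f=det] eq_matI) auto

lemma minor_Rk: "vals p n i \<Longrightarrow> vals p n j \<Longrightarrow> minor (Rk r n) p i j = det (Mk r p i j)"
  unfolding minor_def Rk_def Mk_def vals_def by (intro arg_cong[where f=det] eq_matI) auto

lemma inc_fun_incr: "\<kappa> \<in> inc_fun p n \<Longrightarrow> incr p \<kappa> \<and> vals p n \<kappa>"
  using inc_fun_D[of \<kappa> p n] unfolding incr_def vals_def by blast

lemma restrict_inc_fun: "incr p \<kappa> \<Longrightarrow> vals p n \<kappa> \<Longrightarrow> restrict \<kappa> {0..<p} \<in> inc_fun p n"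
  unfolding inc_fun_def incr_def vals_def PiE_iff by auto

lemma minor_mult:
  assumes B: "B \<in> carrier_mat n n" and C: "C \<in> carrier_mat n n"
    and vi: "vals p n i" and vj: "vals p n j"
  shows "minor (B * C) p i j = (\<Sum>\<kappa>\<in>inc_fun p n. minor B p i \<kappa> * minor C p \<kappa> j)"
proof -
  have "minor (B * C) p i j = det (mat p p (\<lambda>(a,b). \<Sum>k<n. B $$ (i a, k) * C $$ (k, j b)))"
    unfolding minor_def
  proof (intro arg_cong[where f=det] eq_matI)
    fix a b assume ab: "a < dim_row (mat p p (\<lambda>(a,b). \<Sum>k<n. B $$ (i a, k) * C $$ (k, j b)))"
       "b < dim_col (mat p p (\<lambda>(a,b). \<Sum>k<n. B $$ (i a, k) * C $$ (k, j b)))"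
    hence "i a < n" "j b < n" using vi vj unfolding vals_def by auto
    thus "mat p p (\<lambda>(a, b). (B * C) $$ (i a, j b)) $$ (a, b) = mat p p (\<lambda>(a,b). \<Sum>k<n. B $$ (i a, k) * C $$ (k, j b)) $$ (a, b)"
      using ab B C by (auto simp: scalar_prod_def atLeast0LessThan intro!: sum.cong)
  qed auto
  also have "\<dots> = (\<Sum>\<kappa>\<in>inc_fun p n. det (mat p p (\<lambda>(a,t). B $$ (i a, \<kappa> t))) * det (mat p p (\<lambda>(t,b). C $$ (\<kappa> t, j b))))"
    by (rule cauchy_binet_fun)
  finally show ?thesis unfolding minor_def .
qed

definition tpm :: "nat \<Rightarrow> real mat \<Rightarrow> bool" where
  "tpm n B \<longleftrightarrow> (\<forall>p i j. incr p i \<longrightarrow> incr p j \<longrightarrow> vals p n i \<longrightarrow> vals p n j \<longrightarrow> minor B p i j \<ge> 0)"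

lemma tpm_mult:
  assumes B: "B \<in> carrier_mat n n" and C: "C \<in> carrier_mat n n" and "tpm n B" "tpm n C"
  shows "tpm n (B * C)"
  unfolding tpm_def
proof (intro allI impI)
  fix p i j assume h: "incr p i" "incr p j" "vals p n i" "vals p n j"
  show "minor (B * C) p i j \<ge> 0" unfolding minor_mult[OF B C h(3,4)]
    by (rule sum_nonneg, rule mult_nonneg_nonneg) (use assms h inc_fun_incr in \<open>auto simp: tpm_def\<close>)
qed

lemma Rk_carrier: "Rk r n \<in> carrier_mat n n" unfolding Rk_def by simp

lemma tpm_Rk: "0 \<le> r \<Longrightarrow> r \<le> 1 \<Longrightarrow> tpm n (Rk r n)"
  unfolding tpm_def using minor_Rk det_Mk_nonneg by simp

definition distf :: "nat \<Rightarrow> (nat \<Rightarrow> nat) \<Rightarrow> (nat \<Rightarrow> nat) \<Rightarrow> nat" where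
  "distf p i j = (\<Sum>a<p. dd (i a) (j a))"

lemma interl_refl: "incr p j \<Longrightarrow> interl p j j"
  unfolding interl_def incr_def by auto

lemma step_exists:
  assumes i: "incr p i" "vals p n i" and j: "incr p j" "vals p n j" and ne: "\<exists>a<p. i a \<noteq> j a"
  shows "\<exists>\<kappa>. incr p \<kappa> \<and> vals p n \<kappa> \<and> interl p \<kappa> j \<and> distf p i \<kappa> < distf p i j"
proof (cases "\<exists>a<p. j a < i a")
  case True
  define S where "S = {a. a < p \<and> j a < i a}"
  define r where "r = Max S"
  have finS: "finite S" "S \<noteq> {}" unfolding S_def using True by auto
  have rS: "r \<in> S" unfolding r_def using finS by (rule Max_in)
  hence rp: "r < p" and jr: "j r < i r" unfolding S_def by auto
  have above: "i a \<le> j a" if "r < a" "a < p" for a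
  proof (rule ccontr)
    assume "\<not> i a \<le> j a"
    hence "a \<in> S" unfolding S_def using that by auto
    hence "a \<le> r" unfolding r_def using finS by simp
    thus False using that by simp
  qed
  have jmono: "j a < j b" if "a < b" "b < p" for a b using j that unfolding incr_def by auto
  have imono: "i a < i b" if "a < b" "b < p" for a b using i that unfolding incr_def by auto
  have gap: "j r + 1 < j b" if "r < b" "b < p" for b
  proof -
    have "i r < i (Suc r)" using imono[of r "Suc r"] that by simp
    moreover have "i (Suc r) \<le> j (Suc r)" using above[of "Suc r"] that by simp
    moreover have "j (Suc r) \<le> j b" using jmono[of "Suc r" b] that by (cases "Suc r = b") auto
    ultimately show ?thesis using jr by simp
  qed
  define \<kappa> where "\<kappa> = j(r := j r + 1)"
  have "incr p \<kappa>" unfolding incr_def \<kappa>_def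
  proof (intro allI impI)
    fix a b assume ab: "a < b" "b < p"
    show "(j(r := j r + 1)) a < (j(r := j r + 1)) b"
      using jmono[OF ab] gap[of b] jmono[of a r] ab rp by (auto simp: less_imp_le)
  qed
  moreover have "vals p n \<kappa>" unfolding vals_def \<kappa>_def
    using j(2) i(2) jr rp unfolding vals_def by auto
  moreover have "interl p \<kappa> j" unfolding interl_def \<kappa>_def
  proof (intro allI impI)
    fix a assume a: "Suc a < p"
    show "(j(r := j r + 1)) a < j (Suc a) \<and> j a < (j(r := j r + 1)) (Suc a)"
      using jmono[of a "Suc a"] a gap[of "Suc a"] by auto
  qed
  moreover have "distf p i \<kappa> < distf p i j" unfolding distf_def
  proof (rule sum_strict_mono_ex1)
    show "\<forall>a\<in>{..<p}. dd (i a) (\<kappa> a) \<le> dd (i a) (j a)"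
      unfolding \<kappa>_def using jr by (auto simp: dd_def)
    show "\<exists>a\<in>{..<p}. dd (i a) (\<kappa> a) < dd (i a) (j a)"
      using rp jr unfolding \<kappa>_def by (intro bexI[of _ r]) (auto simp: dd_def)
  qed simp
  ultimately show ?thesis by blast
next
  case False
  hence ge: "i a \<le> j a" if "a < p" for a using that by (meson not_le)
  define S where "S = {a. a < p \<and> i a < j a}"
  define r where "r = Min S"
  have finS: "finite S" "S \<noteq> {}" unfolding S_def using ne ge by (auto simp: le_neq_implies_less)
  have rS: "r \<in> S" unfolding r_def using finS by (rule Min_in)
  hence rp: "r < p" and jr: "i r < j r" unfolding S_def by auto
  have below: "j a = i a" if "a < r" for a
  proof (rule ccontr)
    assume "j a \<noteq> i a"
    hence "a \<in> S" unfolding S_def using that rp ge[of a] by auto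
    hence "r \<le> a" unfolding r_def using finS by simp
    thus False using that by simp
  qed
  have jmono: "j a < j b" if "a < b" "b < p" for a b using j that unfolding incr_def by auto
  have imono: "i a < i b" if "a < b" "b < p" for a b using i that unfolding incr_def by auto
  have gap: "j a < j r - 1" if "a < r" for a
  proof -
    have "j a = i a" using below that by simp
    moreover have "i a < i r" using imono that rp by simp
    ultimately show ?thesis using jr by simp
  qed
  define \<kappa> where "\<kappa> = j(r := j r - 1)"
  have "incr p \<kappa>" unfolding incr_def \<kappa>_def
  proof (intro allI impI)
    fix a b assume ab: "a < b" "b < p"
    show "(j(r := j r - 1)) a < (j(r := j r - 1)) b"
      using jmono[OF ab] gap[of a] jmono[of r b] ab rp by auto
  qed
  moreover have "vals p n \<kappa>" unfolding vals_def \<kappa>_def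
    using j(2) rp unfolding vals_def by auto
  moreover have "interl p \<kappa> j" unfolding interl_def \<kappa>_def
  proof (intro allI impI)
    fix a assume a: "Suc a < p"
    show "(j(r := j r - 1)) a < j (Suc a) \<and> j a < (j(r := j r - 1)) (Suc a)"
      using jmono[of a "Suc a"] a gap[of a] by auto
  qed
  moreover have "distf p i \<kappa> < distf p i j" unfolding distf_def
  proof (rule sum_strict_mono_ex1)
    show "\<forall>a\<in>{..<p}. dd (i a) (\<kappa> a) \<le> dd (i a) (j a)"
      unfolding \<kappa>_def using jr by (auto simp: dd_def)
    show "\<exists>a\<in>{..<p}. dd (i a) (\<kappa> a) < dd (i a) (j a)"
      using rp jr unfolding \<kappa>_def by (intro bexI[of _ r]) (auto simp: dd_def)
  qed simp
  ultimately show ?thesis by blast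
qed

lemma Rk_pow_carrier: "Rk r n ^\<^sub>m m \<in> carrier_mat n n"
  using Rk_carrier by (rule pow_carrier_mat)

lemma tpm_pow: "0 \<le> r \<Longrightarrow> r \<le> 1 \<Longrightarrow> tpm n (Rk r n ^\<^sub>m Suc m)"
proof (induction m)
  case 0 thus ?case using tpm_Rk by (simp add: Rk_carrier)
next
  case (Suc m)
  have "tpm n (Rk r n ^\<^sub>m Suc m * Rk r n)"
    by (rule tpm_mult[OF Rk_pow_carrier Rk_carrier Suc.IH[OF Suc.prems] tpm_Rk[OF Suc.prems]])
  thus ?case by (metis pow_mat.simps(2))
qed

lemma osc_pow:
  assumes r: "0 < r" "r < 1"
  shows "\<forall>i j. incr p i \<longrightarrow> incr p j \<longrightarrow> vals p n i \<longrightarrow> vals p n j \<longrightarrow> distf p i j < Suc m \<longrightarrow>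
     minor (Rk r n ^\<^sub>m Suc m) p i j > 0"
proof (induction m)
  case 0
  show ?case
  proof (intro allI impI)
    fix i j assume h: "incr p i" "incr p j" "vals p n i" "vals p n j" "distf p i j < Suc 0"
    have eq: "i a = j a" if "a < p" for a
    proof -
      have "dd (i a) (j a) = 0" using h(5) that unfolding distf_def by simp
      thus ?thesis unfolding dd_def by (auto split: if_splits)
    qed
    have "minor (Rk r n) p i j = minor (Rk r n) p j j" by (rule minor_cong) (use eq in auto)
    also have "\<dots> = det (Mk r p j j)" using minor_Rk h by simp
    also have "\<dots> > 0" using det_Mk_pos[OF r h(2) h(2) interl_refl[OF h(2)]] .
    finally show "minor (Rk r n ^\<^sub>m Suc 0) p i j > 0" using Rk_carrier by simp
  qed
next
  case (Suc m)
  show ?case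
  proof (intro allI impI)
    fix i j assume h: "incr p i" "incr p j" "vals p n i" "vals p n j" "distf p i j < Suc (Suc m)"
    have key: "\<exists>\<kappa>. incr p \<kappa> \<and> vals p n \<kappa> \<and> interl p \<kappa> j \<and> distf p i \<kappa> < Suc m"
    proof (cases "\<exists>a<p. i a \<noteq> j a")
      case True
      then obtain \<kappa> where "incr p \<kappa> \<and> vals p n \<kappa> \<and> interl p \<kappa> j \<and> distf p i \<kappa> < distf p i j"
        using step_exists[OF h(1,3) h(2,4)] by blast
      thus ?thesis using h(5) by auto
    next
      case False
      have "distf p i j = 0" unfolding distf_def dd_def using False by simp
      thus ?thesis using h interl_refl[OF h(2)] by auto
    qed
    then obtain \<kappa> where k: "incr p \<kappa>" "vals p n \<kappa>" "interl p \<kappa> j" "distf p i \<kappa> < Suc m" by blast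
    define \<kappa>' where "\<kappa>' = restrict \<kappa> {0..<p}"
    have k': "\<kappa>' \<in> inc_fun p n" unfolding \<kappa>'_def by (rule restrict_inc_fun[OF k(1,2)])
    have m1: "minor (Rk r n ^\<^sub>m Suc m) p i \<kappa>' > 0"
    proof -
      have "minor (Rk r n ^\<^sub>m Suc m) p i \<kappa>' = minor (Rk r n ^\<^sub>m Suc m) p i \<kappa>"
        by (rule minor_cong) (auto simp: \<kappa>'_def)
      also have "\<dots> > 0" using Suc.IH h k by blast
      finally show ?thesis .
    qed
    have m2: "minor (Rk r n) p \<kappa>' j > 0"
    proof -
      have "minor (Rk r n) p \<kappa>' j = minor (Rk r n) p \<kappa> j"
        by (rule minor_cong) (auto simp: \<kappa>'_def)
      also have "\<dots> = det (Mk r p \<kappa> j)" using minor_Rk k h by simp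
      also have "\<dots> > 0" by (rule det_Mk_pos[OF r k(1) h(2) k(3)])
      finally show ?thesis .
    qed
    have tp1: "tpm n (Rk r n ^\<^sub>m Suc m)" using tpm_pow r by simp
    have tp2: "tpm n (Rk r n)" using tpm_Rk r by simp
    have "minor (Rk r n ^\<^sub>m Suc (Suc m)) p i j = minor (Rk r n ^\<^sub>m Suc m * Rk r n) p i j" by simp
    also have "\<dots> = (\<Sum>\<kappa>\<in>inc_fun p n. minor (Rk r n ^\<^sub>m Suc m) p i \<kappa> * minor (Rk r n) p \<kappa> j)"
      by (rule minor_mult[OF Rk_pow_carrier Rk_carrier h(3,4)])
    also have "\<dots> \<ge> minor (Rk r n ^\<^sub>m Suc m) p i \<kappa>' * minor (Rk r n) p \<kappa>' j"
      by (rule member_le_sum[OF k' _ finite_inc_fun], rule mult_nonneg_nonneg)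
        (use tp1 tp2 h inc_fun_incr in \<open>auto simp: tpm_def\<close>)
    finally show "minor (Rk r n ^\<^sub>m Suc (Suc m)) p i j > 0"
      using m1 m2 by (meson less_le_trans mult_pos_pos)
  qed
qed


lemma kms_dim[simp]: "dim_row (kms_mat n \<rho>) = n" "dim_col (kms_mat n \<rho>) = n"
  unfolding kms_mat_def by simp_all

lemma kms_carrier: "kms_mat n \<rho> \<in> carrier_mat n n" unfolding carrier_mat_def by simp

lemma kms_index[simp]: "j < n \<Longrightarrow> k < n \<Longrightarrow> kms_mat n \<rho> $$ (j,k) = \<rho> ^ dd j k"
  unfolding kms_mat_def dd_def by simp

lemma kms_real: "kms_mat n (of_real r) = map_mat of_real (Rk r n)"
  by (rule eq_matI) (auto simp: Rk_def)

lemma Reals_ex: "\<rho> \<in> \<real> \<Longrightarrow> \<exists>r. \<rho> = complex_of_real r"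
  by (auto elim: Reals_cases)

lemma kms01: "2 \<le> n \<Longrightarrow> kms_mat n \<rho> $$ (0,1) = \<rho>" by (simp add: dd_def)

lemma kms01P: "2 \<le> n \<Longrightarrow> (\<forall>j<dim_row (kms_mat n \<rho>). \<forall>k<dim_col (kms_mat n \<rho>). P (kms_mat n \<rho> $$ (j,k))) \<Longrightarrow> P \<rho>"
proof -
  assume n: "2 \<le> n" and h: "\<forall>j<dim_row (kms_mat n \<rho>). \<forall>k<dim_col (kms_mat n \<rho>). P (kms_mat n \<rho> $$ (j,k))"
  have "P (kms_mat n \<rho> $$ (0,1))" using h n by simp
  thus "P \<rho>" using kms01[OF n] by simp
qed

lemma submatrix_gen:
  assumes "I \<subseteq> {..<dim_row A}" "J \<subseteq> {..<dim_col A}"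
  shows "submatrix A I J = mat (card I) (card J) (\<lambda>(a,b). A $$ (pick I a, pick J b))"
proof -
  have 1: "{i. i < dim_row A \<and> i \<in> I} = I" "{j. j < dim_col A \<and> j \<in> J} = J" using assms by auto
  show ?thesis unfolding submatrix_def 1 by simp
qed

lemma pick_incr: "incr (card I) (pick I)"
  unfolding incr_def using pick_mono_le by blast

lemma pick_vals: "I \<subseteq> {..<n} \<Longrightarrow> vals (card I) n (pick I)"
  unfolding vals_def using pick_in_set_le by blast

lemma det_sub_real:
  assumes B: "B \<in> carrier_mat n n" and I: "I \<subseteq> {..<n}" and J: "J \<subseteq> {..<n}" and c: "card I = card J"
  shows "det (submatrix (map_mat complex_of_real B) I J) = of_real (minor B (card I) (pick I) (pick J))"
proof -
  have "submatrix (map_mat complex_of_real B) I J = map_mat of_real (mat (card I) (card I) (\<lambda>(a,b). B $$ (pick I a, pick J b)))"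
    unfolding submatrix_gen[of I "map_mat complex_of_real B" J, simplified, OF I[unfolded carrier_matD(1)[OF B, symmetric]] J[unfolded carrier_matD(2)[OF B, symmetric]]]
  proof (rule eq_matI)
    fix a b assume ab: "a < dim_row (map_mat complex_of_real (mat (card I) (card I) (\<lambda>(a, b). B $$ (pick I a, pick J b))))"
      "b < dim_col (map_mat complex_of_real (mat (card I) (card I) (\<lambda>(a, b). B $$ (pick I a, pick J b))))"
    hence "pick I a < n" "pick J b < n" using pick_vals[OF I] pick_vals[OF J] c unfolding vals_def by auto
    thus "mat (card I) (card J) (\<lambda>(a, b). map_mat complex_of_real B $$ (pick I a, pick J b)) $$ (a, b) =
         map_mat complex_of_real (mat (card I) (card I) (\<lambda>(a, b). B $$ (pick I a, pick J b))) $$ (a, b)"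
      using ab B c by auto
  qed (use c in auto)
  thus ?thesis unfolding minor_def by (simp add: of_real_hom.hom_det)
qed

lemma pick_0: "0 \<in> I \<Longrightarrow> pick I 0 = 0" by (simp add: Least_eq_0)
lemma pick_1_single: "pick {1} 0 = 1" by (simp add: Least_equality)
lemma pick_01: "pick {0,1} 1 = 1"
proof -
  have "pick {0,1} (Suc 0) = (LEAST a. a \<in> {0::nat,1} \<and> a > pick {0,1} 0)" by simp
  also have "pick {0::nat,1} 0 = 0" by (simp add: pick_0)
  also have "(LEAST a. a \<in> {0::nat,1} \<and> a > 0) = 1" by (rule Least_equality) auto
  finally show ?thesis by simp
qed

lemma det2: "det (mat 2 2 f) = f (0,0) * f (1,1) - f (0,1) * (f (1,0) :: 'a :: comm_ring_1)"
proof -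
  have c: "mat 2 2 f \<in> carrier_mat 2 2" by simp
  have "det (mat 2 2 f) = (\<Sum>j<2. mat 2 2 f $$ (0,j) * cofactor (mat 2 2 f) 0 j)"
    by (rule laplace_expansion_row[OF c]) simp
  also have "\<dots> = f (0,0) * cofactor (mat 2 2 f) 0 0 + f (0,1) * cofactor (mat 2 2 f) 0 1"
    by (simp add: numeral_2_eq_2)
  also have "cofactor (mat 2 2 f) 0 0 = f (1,1)"
    unfolding cofactor_def by (subst det_single) (auto simp: mat_delete_def)
  also have "cofactor (mat 2 2 f) 0 1 = - f (1,0)"
    unfolding cofactor_def by (subst det_single) (auto simp: mat_delete_def)
  finally show ?thesis by simp
qed

lemma minor_01_01:
  assumes "2 \<le> n" "A \<in> carrier_mat n n"
  shows "det (submatrix A {0,1} {0,1}) = A $$ (0,0) * A $$ (1,1) - A $$ (0,1) * A $$ (1,0)"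
proof -
  have "submatrix A {0,1} {0,1} = mat 2 2 (\<lambda>(a,b). A $$ (pick {0,1} a, pick {0,1} b))"
    using submatrix_gen[of "{0,1}" A "{0,1}"] assms by auto
  have p0: "pick {0,1} 0 = 0" "pick {0, Suc 0} 0 = 0" by (rule pick_0, simp)+
  have p1: "pick {0,1} 1 = 1" "pick {0,1} (Suc 0) = Suc 0" using pick_01 by simp_all
  thus ?thesis using \<open>submatrix A {0,1} {0,1} = _\<close> by (simp add: det2 p0 p1 del: pick.simps)
qed

lemma minor_0_1:
  assumes "2 \<le> n" "A \<in> carrier_mat n n"
  shows "det (submatrix A {0} {1}) = A $$ (0,1)"
proof -
  have "submatrix A {0} {1} = mat 1 1 (\<lambda>(a,b). A $$ (pick {0} a, pick {1} b))"
    using submatrix_gen[of "{0}" A "{1}"] assms by auto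
  have p0: "pick {0} 0 = 0" by (rule pick_0) simp
  show ?thesis using \<open>submatrix A {0} {1} = _\<close> pick_1_single
    by (subst det_single) (auto simp: p0 simp del: pick.simps)
qed

lemma item1: assumes "2 \<le> n" shows "all_entries_positive (kms_mat n \<rho>) \<longleftrightarrow> pos_c \<rho>"
proof
  assume "all_entries_positive (kms_mat n \<rho>)"
  thus "pos_c \<rho>" unfolding all_entries_positive_def by (rule kms01P[OF assms])
next
  assume "pos_c \<rho>"
  then obtain r where r: "\<rho> = of_real r" "r > 0" unfolding pos_c_def using Reals_ex by force
  thus "all_entries_positive (kms_mat n \<rho>)" unfolding all_entries_positive_def pos_c_def
    by (simp add: of_real_power[symmetric] del: of_real_power)
qed

lemma item2: assumes "2 \<le> n" shows "real_symmetric (kms_mat n \<rho>) \<longleftrightarrow> \<rho> \<in> \<real>"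
proof -
  have t: "transpose_mat (kms_mat n \<rho>) = kms_mat n \<rho>"
    by (rule eq_matI) (auto simp: dd_sym)
  have "real_mat (kms_mat n \<rho>) \<longleftrightarrow> \<rho> \<in> \<real>"
  proof
    assume "real_mat (kms_mat n \<rho>)"
    thus "\<rho> \<in> \<real>" unfolding real_mat_def by (rule kms01P[OF assms])
  next
    assume "\<rho> \<in> \<real>" thus "real_mat (kms_mat n \<rho>)" unfolding real_mat_def by auto
  qed
  thus ?thesis unfolding real_symmetric_def using t by simp
qed

lemma adjoint_kms: "adjoint_mat (kms_mat n \<rho>) = kms_mat n (cnj \<rho>)"
  unfolding adjoint_mat_def by (rule eq_matI) (auto simp: dd_sym)

lemma kms_inj:
  assumes "2 \<le> n" "kms_mat n \<rho> = kms_mat n \<sigma>" shows "\<rho> = \<sigma>"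
  using kms01[OF assms(1), of \<rho>] kms01[OF assms(1), of \<sigma>] assms(2) by simp

lemma item3: assumes "2 \<le> n" shows "hermitian (kms_mat n \<rho>) \<longleftrightarrow> \<rho> \<in> \<real>"
  unfolding hermitian_def adjoint_kms Reals_cnj_iff using kms_inj[OF assms] by metis

lemma item8: assumes "2 \<le> n" shows "greens_matrix (kms_mat n \<rho>) \<longleftrightarrow> \<rho> \<in> \<real> \<and> \<rho> \<noteq> 0"
proof
  assume g: "greens_matrix (kms_mat n \<rho>)"
  hence "real_mat (kms_mat n \<rho>)" unfolding greens_matrix_def by simp
  hence "\<rho> \<in> \<real>" unfolding real_mat_def by (rule kms01P[OF assms])
  moreover have "\<rho> \<noteq> 0"
  proof
    assume z: "\<rho> = 0"
    obtain \<alpha> \<beta> :: "nat \<Rightarrow> real" where ab: "\<forall>j<n. \<forall>k<n.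
        (j \<le> k \<longrightarrow> kms_mat n \<rho> $$ (j,k) = complex_of_real (\<alpha> j * \<beta> k)) \<and>
        (k \<le> j \<longrightarrow> kms_mat n \<rho> $$ (j,k) = complex_of_real (\<alpha> k * \<beta> j))"
      using g unfolding greens_matrix_def by auto
    have "complex_of_real (\<alpha> 0 * \<beta> 0) = 1" using ab[rule_format, of 0 0] assms z by (simp add: dd_def)
    hence 1: "\<alpha> 0 * \<beta> 0 = 1" by (metis of_real_eq_1_iff)
    have "complex_of_real (\<alpha> 0 * \<beta> 1) = 0" using ab[rule_format, of 0 1] assms z by (simp add: dd_def)
    hence 2: "\<alpha> 0 * \<beta> 1 = 0" by simp
    have "complex_of_real (\<alpha> 1 * \<beta> 1) = 1" using ab[rule_format, of 1 1] assms z by (simp add: dd_def)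
    hence 3: "\<alpha> 1 * \<beta> 1 = 1" by (metis of_real_eq_1_iff)
    from 1 have "\<alpha> 0 \<noteq> 0" by auto
    with 2 have "\<beta> 1 = 0" by simp
    with 3 show False by simp
  qed
  ultimately show "\<rho> \<in> \<real> \<and> \<rho> \<noteq> 0" by simp
next
  assume h: "\<rho> \<in> \<real> \<and> \<rho> \<noteq> 0"
  then obtain r where r: "\<rho> = of_real r" "r \<noteq> 0" using Reals_ex by force
  have pw: "r ^ (k - j) = inverse r ^ j * r ^ k" if "j \<le> k" for j k
    using r(2) that by (simp add: power_diff power_inverse field_simps)
  have pj: "complex_of_real (inverse r ^ j) * complex_of_real (r ^ j) = 1" for j
  proof -
    have "inverse r ^ j * r ^ j = 1" using r(2) by (simp add: power_inverse)
    thus ?thesis by (metis of_real_1 of_real_mult)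
  qed
  have "\<forall>j<n. \<forall>k<n. (j \<le> k \<longrightarrow> kms_mat n \<rho> $$ (j,k) = complex_of_real ((\<lambda>j. inverse r ^ j) j * (\<lambda>k. r ^ k) k)) \<and>
        (k \<le> j \<longrightarrow> kms_mat n \<rho> $$ (j,k) = complex_of_real ((\<lambda>j. inverse r ^ j) k * (\<lambda>k. r ^ k) j))"
    using pw r(1) pj by (auto simp: dd_def of_real_power[symmetric] simp del: of_real_power)
  hence "\<exists>\<alpha> \<beta> :: nat \<Rightarrow> real. \<forall>j<n. \<forall>k<n.
        (j \<le> k \<longrightarrow> kms_mat n \<rho> $$ (j,k) = complex_of_real (\<alpha> j * \<beta> k)) \<and>
        (k \<le> j \<longrightarrow> kms_mat n \<rho> $$ (j,k) = complex_of_real (\<alpha> k * \<beta> j))" by blast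
  moreover have "real_mat (kms_mat n \<rho>)" unfolding real_mat_def using h by auto
  ultimately show "greens_matrix (kms_mat n \<rho>)" unfolding greens_matrix_def using kms_carrier by simp
qed

lemma tp_real:
  assumes "0 \<le> r" "r \<le> 1"
  shows "totally_positive (kms_mat n (of_real r))"
  unfolding totally_positive_def
proof
  show "real_mat (kms_mat n (complex_of_real r))" unfolding real_mat_def
    by (auto simp: of_real_power[symmetric] simp del: of_real_power)
  show "all_minors nonneg_c (kms_mat n (complex_of_real r))" unfolding all_minors_def kms_real
  proof (intro allI impI)
    fix I J assume IJ: "I \<subseteq> {..<dim_row (map_mat complex_of_real (Rk r n))}"
       "J \<subseteq> {..<dim_col (map_mat complex_of_real (Rk r n))}" "I \<noteq> {}" "card I = card J"
    have I: "I \<subseteq> {..<n}" and J: "J \<subseteq> {..<n}" using IJ by (auto simp: Rk_def)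
    have "minor (Rk r n) (card I) (pick I) (pick J) \<ge> 0"
      using tpm_Rk[OF assms, of n] pick_incr[of I] pick_incr[of J] pick_vals[OF I] pick_vals[OF J] IJ(4)
      unfolding tpm_def by metis
    thus "nonneg_c (det (submatrix (map_mat complex_of_real (Rk r n)) I J))"
      unfolding det_sub_real[OF Rk_carrier I J IJ(4)] nonneg_c_def by simp
  qed
qed

lemma item9: assumes "2 \<le> n" shows "totally_positive (kms_mat n \<rho>) \<longleftrightarrow> \<rho> \<in> \<real> \<and> 0 \<le> Re \<rho> \<and> Re \<rho> \<le> 1"
proof
  assume tp: "totally_positive (kms_mat n \<rho>)"
  hence "real_mat (kms_mat n \<rho>)" unfolding totally_positive_def by simp
  hence "\<rho> \<in> \<real>" unfolding real_mat_def by (rule kms01P[OF assms])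
  then obtain r where r: "\<rho> = of_real r" using Reals_ex by force
  have am: "all_minors nonneg_c (kms_mat n \<rho>)" using tp unfolding totally_positive_def by simp
  have "nonneg_c (det (submatrix (kms_mat n \<rho>) {0} {1}))"
    using am assms unfolding all_minors_def by auto
  hence r0: "r \<ge> 0" using minor_0_1[OF assms kms_carrier] kms01[OF assms] r unfolding nonneg_c_def by simp
  have "nonneg_c (det (submatrix (kms_mat n \<rho>) {0,1} {0,1}))"
    using am assms unfolding all_minors_def by auto
  hence "1 - r * r \<ge> 0" using minor_01_01[OF assms kms_carrier] assms r unfolding nonneg_c_def
    by (simp add: dd_def)
  hence "r \<le> 1" using r0 by (metis diff_ge_0_iff_ge mult_le_one not_le mult_strict_mono' less_le_not_le
        mult.right_neutral zero_le_one)
  thus "\<rho> \<in> \<real> \<and> 0 \<le> Re \<rho> \<and> Re \<rho> \<le> 1" using r r0 by simp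
next
  assume "\<rho> \<in> \<real> \<and> 0 \<le> Re \<rho> \<and> Re \<rho> \<le> 1"
  then obtain r where "\<rho> = of_real r" "0 \<le> r" "r \<le> 1" using Reals_ex by force
  thus "totally_positive (kms_mat n \<rho>)" using tp_real by simp
qed

lemma one_pow: "1\<^sub>m n ^\<^sub>m m = (1\<^sub>m n :: 'a :: semiring_1 mat)"
  by (induction m) auto

lemma item10: assumes "2 \<le> n" shows "oscillatory (kms_mat n \<rho>) \<longleftrightarrow> \<rho> \<in> \<real> \<and> 0 < Re \<rho> \<and> Re \<rho> < 1"
proof
  assume osc: "oscillatory (kms_mat n \<rho>)"
  hence "\<rho> \<in> \<real> \<and> 0 \<le> Re \<rho> \<and> Re \<rho> \<le> 1" using item9[OF assms] unfolding oscillatory_def by simp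
  then obtain r where r: "\<rho> = of_real r" "0 \<le> r" "r \<le> 1" using Reals_ex by force
  obtain m where m: "m > 0" "all_minors pos_c (kms_mat n \<rho> ^\<^sub>m m)" using osc unfolding oscillatory_def by auto
  have pc: "kms_mat n \<rho> ^\<^sub>m m \<in> carrier_mat n n" using kms_carrier by (rule pow_carrier_mat)
  have "r \<noteq> 0"
  proof
    assume "r = 0"
    hence "kms_mat n \<rho> = 1\<^sub>m n" using r by (intro eq_matI) (auto simp: dd_def)
    hence "kms_mat n \<rho> ^\<^sub>m m = 1\<^sub>m n" by (simp add: one_pow)
    moreover have "pos_c (det (submatrix (kms_mat n \<rho> ^\<^sub>m m) {0} {1}))"
      using m(2) assms pc unfolding all_minors_def by auto
    ultimately show False using minor_0_1[OF assms, of "1\<^sub>m n :: complex mat"] assms unfolding pos_c_def by simp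
  qed
  moreover have "r \<noteq> 1"
  proof
    assume "r = 1"
    hence k1: "kms_mat n \<rho> = mat n n (\<lambda>_. 1)" using r by (intro eq_matI) auto
    obtain m' where m': "m = Suc m'" using m(1) by (cases m) auto
    define B where "B = kms_mat n \<rho> ^\<^sub>m m'"
    have B: "B \<in> carrier_mat n n" unfolding B_def using kms_carrier by (rule pow_carrier_mat)
    have eqc: "(B * kms_mat n \<rho>) $$ (i,0) = (B * kms_mat n \<rho>) $$ (i,1)" if "i < n" for i
      using that assms B k1 by (auto simp: scalar_prod_def)
    have "kms_mat n \<rho> ^\<^sub>m m = B * kms_mat n \<rho>" unfolding B_def m' by simp
    moreover have "pos_c (det (submatrix (kms_mat n \<rho> ^\<^sub>m m) {0,1} {0,1}))"
      using m(2) assms pc unfolding all_minors_def by auto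
    ultimately show False using minor_01_01[OF assms, of "B * kms_mat n \<rho>"] B kms_carrier eqc[of 0] eqc[of 1] assms
      unfolding pos_c_def by (simp add: mult.commute)
  qed
  ultimately show "\<rho> \<in> \<real> \<and> 0 < Re \<rho> \<and> Re \<rho> < 1" using r by simp
next
  assume "\<rho> \<in> \<real> \<and> 0 < Re \<rho> \<and> Re \<rho> < 1"
  then obtain r where r: "\<rho> = of_real r" "0 < r" "r < 1" using Reals_ex by force
  have tp: "totally_positive (kms_mat n \<rho>)" using tp_real r by simp
  define m where "m = Suc (n * n)"
  have "all_minors pos_c (kms_mat n \<rho> ^\<^sub>m m)"
    unfolding all_minors_def
  proof (intro allI impI)
    fix I J assume IJ: "I \<subseteq> {..<dim_row (kms_mat n \<rho> ^\<^sub>m m)}" "J \<subseteq> {..<dim_col (kms_mat n \<rho> ^\<^sub>m m)}"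
      "I \<noteq> {}" "card I = card J"
    have pcm: "kms_mat n \<rho> ^\<^sub>m m \<in> carrier_mat n n" using kms_carrier by (rule pow_carrier_mat)
    have I: "I \<subseteq> {..<n}" and J: "J \<subseteq> {..<n}" using IJ carrier_matD[OF pcm] by auto
    have pw: "kms_mat n \<rho> ^\<^sub>m m = map_mat of_real (Rk r n ^\<^sub>m m)"
      unfolding r kms_real by (rule of_real_hom.mat_hom_pow[OF Rk_carrier, symmetric])
    have cI: "card I \<le> n" using card_mono[OF _ I] by simp
    have "distf (card I) (pick I) (pick J) \<le> card I * n"
    proof -
      have "distf (card I) (pick I) (pick J) \<le> (\<Sum>a<card I. n)" unfolding distf_def
      proof (rule sum_mono)
        fix a assume "a \<in> {..<card I}"
        hence "pick I a < n" "pick J a < n" using pick_vals[OF I] pick_vals[OF J] IJ(4) unfolding vals_def by auto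
        thus "dd (pick I a) (pick J a) \<le> n" unfolding dd_def by auto
      qed
      thus ?thesis by simp
    qed
    also have "\<dots> \<le> n * n" using cI by simp
    finally have "distf (card I) (pick I) (pick J) < Suc (n * n)" by simp
    hence "minor (Rk r n ^\<^sub>m m) (card I) (pick I) (pick J) > 0"
      using osc_pow[OF r(2,3), of "card I" n "n * n"] pick_incr[of I] pick_incr[of J] pick_vals[OF I] pick_vals[OF J] IJ(4)
      unfolding m_def by metis
    thus "pos_c (det (submatrix (kms_mat n \<rho> ^\<^sub>m m) I J))"
      unfolding pw det_sub_real[OF pow_carrier_mat[OF Rk_carrier] I J IJ(4)] pos_c_def by simp
  qed
  thus "oscillatory (kms_mat n \<rho>)" unfolding oscillatory_def using tp kms_carrier m_def by auto
qed


definition Qf :: "real \<Rightarrow> nat \<Rightarrow> (nat \<Rightarrow> complex) \<Rightarrow> complex" where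
  "Qf r N y = (\<Sum>j<N. \<Sum>k<N. cnj (y j) * complex_of_real (r ^ dd j k) * y k)"

definition Yf :: "real \<Rightarrow> (nat \<Rightarrow> complex) \<Rightarrow> nat \<Rightarrow> complex" where
  "Yf r y m = (\<Sum>j\<le>m. complex_of_real (r ^ (m - j)) * y j)"

lemma Yf_Suc: "Yf r y (Suc m) = complex_of_real r * Yf r y m + y (Suc m)"
proof -
  have "Yf r y (Suc m) = (\<Sum>j\<le>m. complex_of_real (r ^ (Suc m - j)) * y j) + y (Suc m)"
    unfolding Yf_def by simp
  also have "(\<Sum>j\<le>m. complex_of_real (r ^ (Suc m - j)) * y j) = complex_of_real r * Yf r y m"
    unfolding Yf_def sum_distrib_left
    by (rule sum.cong) (auto simp: Suc_diff_le)
  finally show ?thesis .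
qed

lemma Yf_0: "Yf r y 0 = y 0" unfolding Yf_def by simp

lemma double_sum_Suc:
  "(\<Sum>j<Suc M. \<Sum>k<Suc M. f j k) = (\<Sum>j<M. \<Sum>k<M. f j k) + (\<Sum>j<M. f j M) + (\<Sum>k<M. f M k) + (f M M :: 'a::comm_monoid_add)"
  by (simp add: sum.distrib ac_simps)

lemma cnj_Yf: "cnj (Yf r y m) = (\<Sum>j\<le>m. complex_of_real (r ^ (m - j)) * cnj (y j))"
  unfolding Yf_def by (simp add: cnj_sum)

lemma Qf_identity:
  "Qf r (Suc N) y = Yf r y N * cnj (Yf r y N) + complex_of_real (1 - r^2) * (\<Sum>m<N. Yf r y m * cnj (Yf r y m))"
proof (induction N)
  case 0 thus ?case by (simp add: Qf_def Yf_0 dd_def)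
next
  case (Suc N)
  define a where "a = Yf r y N"
  define b where "b = y (Suc N)"
  define c where "c = complex_of_real r"
  have s1: "(\<Sum>j<Suc N. cnj (y j) * complex_of_real (r ^ dd j (Suc N)) * y (Suc N)) = c * cnj a * b"
  proof -
    have "(\<Sum>j<Suc N. cnj (y j) * complex_of_real (r ^ dd j (Suc N)) * y (Suc N)) =
        (\<Sum>j\<le>N. c * (complex_of_real (r ^ (N - j)) * cnj (y j)) * b)"
      unfolding lessThan_Suc_atMost b_def c_def
      by (rule sum.cong) (auto simp: dd_def Suc_diff_le)
    also have "\<dots> = c * cnj a * b" unfolding a_def cnj_Yf
      by (simp add: sum_distrib_left sum_distrib_right)
    finally show ?thesis .
  qed
  have s2: "(\<Sum>k<Suc N. cnj (y (Suc N)) * complex_of_real (r ^ dd (Suc N) k) * y k) = c * a * cnj b"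
  proof -
    have "(\<Sum>k<Suc N. cnj (y (Suc N)) * complex_of_real (r ^ dd (Suc N) k) * y k) =
        (\<Sum>k\<le>N. c * (complex_of_real (r ^ (N - k)) * y k) * cnj b)"
      unfolding lessThan_Suc_atMost b_def c_def
      by (rule sum.cong) (auto simp: dd_def Suc_diff_le)
    also have "\<dots> = c * a * cnj b" unfolding a_def Yf_def
      by (simp add: sum_distrib_left sum_distrib_right)
    finally show ?thesis .
  qed
  have "Qf r (Suc (Suc N)) y = Qf r (Suc N) y + c * cnj a * b + c * a * cnj b + cnj b * b"
    unfolding Qf_def double_sum_Suc[of _ "Suc N"] using s1 s2 by (simp add: dd_def b_def)
  also have "\<dots> = a * cnj a + complex_of_real (1 - r^2) * (\<Sum>m<N. Yf r y m * cnj (Yf r y m))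
      + c * cnj a * b + c * a * cnj b + cnj b * b" unfolding Suc.IH a_def ..
  also have "\<dots> = Yf r y (Suc N) * cnj (Yf r y (Suc N)) + complex_of_real (1 - r^2) * (\<Sum>m<Suc N. Yf r y m * cnj (Yf r y m))"
  proof -
    define S where "S = (\<Sum>m<N. Yf r y m * cnj (Yf r y m))"
    have cc: "cnj c = c" unfolding c_def by simp
    have Y1: "Yf r y (Suc N) = c * a + b" unfolding Yf_Suc a_def b_def c_def ..
    have Y1c: "cnj (Yf r y (Suc N)) = c * cnj a + cnj b" unfolding Y1 using cc by simp
    have sS: "(\<Sum>m<Suc N. Yf r y m * cnj (Yf r y m)) = S + a * cnj a" unfolding S_def a_def by simp
    have rr: "complex_of_real (1 - r^2) = 1 - c * c" unfolding c_def by (simp add: power2_eq_square)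
    have ring: "x1 * x2 + (1 - x5*x5) * x6 + x5 * x2 * x3 + x5 * x1 * x4 + x4 * x3 = (x5*x1 + x3) * (x5*x2 + x4) + (1 - x5*x5) * (x6 + x1*x2)"
      for x1 x2 x3 x4 x5 x6 :: complex by (simp add: algebra_simps)
    show ?thesis unfolding Y1c sS rr S_def[symmetric] unfolding Y1 using ring by simp
  qed
  finally show ?case .
qed

lemma Qf_real:
  "Qf r (Suc N) y = complex_of_real ((cmod (Yf r y N))^2 + (1 - r^2) * (\<Sum>m<N. (cmod (Yf r y m))^2))"
  unfolding Qf_identity by (simp only: of_real_add of_real_mult of_real_sum complex_norm_square)

lemma quad_kms:
  assumes "x \<in> carrier_vec n"
  shows "quad_form (kms_mat n (complex_of_real r)) x = Qf r n (\<lambda>j. x $ j)"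
  unfolding quad_form_def Qf_def
  by (auto intro!: sum.cong simp: of_real_power[symmetric] simp del: of_real_power)

lemma quad_nonneg:
  assumes "\<bar>r\<bar> \<le> 1" "n = Suc N"
  shows "nonneg_c (Qf r n y)"
proof -
  have "r^2 \<le> 1" using assms(1) abs_square_le_1 by blast
  hence "1 - r^2 \<ge> 0" by simp
  thus ?thesis unfolding assms Qf_real nonneg_c_def by (simp add: sum_nonneg)
qed

lemma quad_pos:
  assumes "\<bar>r\<bar> < 1" "n = Suc N" and nz: "\<exists>j<n. y j \<noteq> 0"
  shows "pos_c (Qf r n y)"
proof -
  have "r^2 < 1" using assms(1) abs_square_less_1 by blast
  hence r2: "1 - r^2 > 0" by simp
  define v where "v = (cmod (Yf r y N))^2 + (1 - r^2) * (\<Sum>m<N. (cmod (Yf r y m))^2)"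
  have v0: "v \<ge> 0" unfolding v_def using r2 by (simp add: sum_nonneg)
  have "v \<noteq> 0"
  proof
    assume "v = 0"
    have t1: "(cmod (Yf r y N))^2 \<ge> 0" by simp
    have t2: "(1 - r^2) * (\<Sum>m<N. (cmod (Yf r y m))^2) \<ge> 0" using r2 by (simp add: sum_nonneg)
    have "(cmod (Yf r y N))^2 = 0 \<and> (1 - r^2) * (\<Sum>m<N. (cmod (Yf r y m))^2) = 0"
      using \<open>v = 0\<close> t1 t2 unfolding v_def by linarith
    hence a: "(cmod (Yf r y N))^2 = 0" and b: "(\<Sum>m<N. (cmod (Yf r y m))^2) = 0"
      using r2 by auto
    have "Yf r y m = 0" if "m \<le> N" for m
    proof (cases "m = N")
      case True thus ?thesis using a by simp
    next
      case False
      hence "m \<in> {..<N}" using that by simp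
      hence "(cmod (Yf r y m))^2 = 0" using b by (subst (asm) sum_nonneg_eq_0_iff) auto
      thus ?thesis by simp
    qed
    hence "y j = 0" if "j < n" for j
    proof (cases j)
      case 0 thus ?thesis using \<open>\<And>m. m \<le> N \<Longrightarrow> Yf r y m = 0\<close>[of 0] by (simp add: Yf_0)
    next
      case (Suc j')
      have "Yf r y (Suc j') = 0" "Yf r y j' = 0" using \<open>\<And>m. m \<le> N \<Longrightarrow> Yf r y m = 0\<close> that Suc assms(2) by auto
      thus ?thesis using Yf_Suc[of r y j'] Suc by simp
    qed
    thus False using nz by auto
  qed
  hence "v > 0" using v0 by simp
  thus ?thesis unfolding assms(2) Qf_real v_def[symmetric] pos_c_def by simp
qed

lemma sum_01:
  fixes n :: nat and f :: "nat \<Rightarrow> complex"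
  assumes "2 \<le> n" "\<And>j. 2 \<le> j \<Longrightarrow> j < n \<Longrightarrow> f j = 0"
  shows "(\<Sum>j<n. f j) = f 0 + f 1"
proof -
  have "(\<Sum>j<n. f j) = (\<Sum>j\<in>{0,1}. f j)"
    by (rule sum.mono_neutral_right) (use assms in auto)
  thus ?thesis by simp
qed

lemma quad_test:
  assumes n: "2 \<le> n" and s: "s \<in> {1, -1}"
  defines "x \<equiv> vec n (\<lambda>j. if j = 0 then 1 else if j = 1 then s else 0)"
  shows "x \<in> carrier_vec n" "x \<noteq> 0\<^sub>v n" "quad_form (kms_mat n \<rho>) x = 2 + 2 * s * \<rho>"
proof -
  show "x \<in> carrier_vec n" unfolding x_def by simp
  show "x \<noteq> 0\<^sub>v n"
  proof
    assume "x = 0\<^sub>v n"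
    hence "x $ 0 = 0" using n by simp
    thus False unfolding x_def using n by simp
  qed
  have xj: "x $ j = (if j = 0 then 1 else if j = 1 then s else 0)" if "j < n" for j
    unfolding x_def using that by simp
  have "quad_form (kms_mat n \<rho>) x = (\<Sum>j<n. \<Sum>k<n. cnj (x $ j) * kms_mat n \<rho> $$ (j,k) * x $ k)"
    unfolding quad_form_def by simp
  also have "\<dots> = (\<Sum>j<n. cnj (x $ j) * kms_mat n \<rho> $$ (j,0) * x $ 0 + cnj (x $ j) * kms_mat n \<rho> $$ (j,1) * x $ 1)"
    by (rule sum.cong[OF refl], rule sum_01[OF n]) (use xj n in auto)
  also have "\<dots> = (cnj (x $ 0) * kms_mat n \<rho> $$ (0,0) * x $ 0 + cnj (x $ 0) * kms_mat n \<rho> $$ (0,1) * x $ 1)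
     + (cnj (x $ 1) * kms_mat n \<rho> $$ (1,0) * x $ 0 + cnj (x $ 1) * kms_mat n \<rho> $$ (1,1) * x $ 1)"
    by (rule sum_01[OF n]) (use xj n in auto)
  also have "\<dots> = 2 + 2 * s * \<rho>"
    using n s xj[of 0] xj[of 1] by (auto simp: dd_def algebra_simps)
  finally show "quad_form (kms_mat n \<rho>) x = 2 + 2 * s * \<rho>" .
qed

lemma item5: assumes n: "2 \<le> n"
  shows "positive_definite (kms_mat n \<rho>) \<longleftrightarrow> \<rho> \<in> \<real> \<and> -1 < Re \<rho> \<and> Re \<rho> < 1"
proof
  assume pd: "positive_definite (kms_mat n \<rho>)"
  have t: "pos_c (2 + 2 * s * \<rho>)" if "s \<in> {1,-1}" for s
    using pd quad_test[OF n that] unfolding positive_definite_def by auto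
  have a: "pos_c (2 + 2 * \<rho>)" using t[of 1] by simp
  have b: "pos_c (2 - 2 * \<rho>)" using t[of "-1"] by simp
  have h: "2 + 2 * \<rho> \<in> \<real>" using a unfolding pos_c_def by simp
  have "(2 + 2 * \<rho> - 2) / 2 \<in> \<real>" by (intro Reals_divide Reals_diff h) auto
  hence "\<rho> \<in> \<real>" by simp
  thus "\<rho> \<in> \<real> \<and> -1 < Re \<rho> \<and> Re \<rho> < 1" using a b unfolding pos_c_def by simp
next
  assume "\<rho> \<in> \<real> \<and> -1 < Re \<rho> \<and> Re \<rho> < 1"
  then obtain r where r: "\<rho> = of_real r" "\<bar>r\<bar> < 1" using Reals_ex by force
  obtain N where N: "n = Suc N" using n by (cases n) auto
  show "positive_definite (kms_mat n \<rho>)" unfolding positive_definite_def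
  proof (intro conjI ballI impI)
    show "kms_mat n \<rho> \<in> carrier_mat (dim_row (kms_mat n \<rho>)) (dim_row (kms_mat n \<rho>))"
      using kms_carrier by simp
    fix x :: "complex vec" assume x: "x \<in> carrier_vec (dim_row (kms_mat n \<rho>))" and nz: "x \<noteq> 0\<^sub>v (dim_row (kms_mat n \<rho>))"
    have xc: "x \<in> carrier_vec n" using x by simp
    have "\<exists>j<n. x $ j \<noteq> 0"
    proof (rule ccontr)
      assume "\<not> (\<exists>j<n. x $ j \<noteq> 0)"
      hence "x = 0\<^sub>v n" using xc by (intro eq_vecI) auto
      thus False using nz by simp
    qed
    thus "pos_c (quad_form (kms_mat n \<rho>) x)"
      unfolding r quad_kms[OF xc] using quad_pos[OF r(2) N] by simp
  qed
qed

lemma item6: assumes n: "2 \<le> n"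
  shows "positive_semidefinite (kms_mat n \<rho>) \<longleftrightarrow> \<rho> \<in> \<real> \<and> -1 \<le> Re \<rho> \<and> Re \<rho> \<le> 1"
proof
  assume pd: "positive_semidefinite (kms_mat n \<rho>)"
  have t: "nonneg_c (2 + 2 * s * \<rho>)" if "s \<in> {1,-1}" for s
    using pd quad_test[OF n that] unfolding positive_semidefinite_def by auto
  have a: "nonneg_c (2 + 2 * \<rho>)" using t[of 1] by simp
  have b: "nonneg_c (2 - 2 * \<rho>)" using t[of "-1"] by simp
  have h: "2 + 2 * \<rho> \<in> \<real>" using a unfolding nonneg_c_def by simp
  have "(2 + 2 * \<rho> - 2) / 2 \<in> \<real>" by (intro Reals_divide Reals_diff h) auto
  hence "\<rho> \<in> \<real>" by simp
  thus "\<rho> \<in> \<real> \<and> -1 \<le> Re \<rho> \<and> Re \<rho> \<le> 1" using a b unfolding nonneg_c_def by simp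
next
  assume "\<rho> \<in> \<real> \<and> -1 \<le> Re \<rho> \<and> Re \<rho> \<le> 1"
  then obtain r where r: "\<rho> = of_real r" "\<bar>r\<bar> \<le> 1" using Reals_ex by force
  obtain N where N: "n = Suc N" using n by (cases n) auto
  show "positive_semidefinite (kms_mat n \<rho>)" unfolding positive_semidefinite_def
  proof (intro conjI ballI impI)
    show "kms_mat n \<rho> \<in> carrier_mat (dim_row (kms_mat n \<rho>)) (dim_row (kms_mat n \<rho>))"
      using kms_carrier by simp
    fix x :: "complex vec" assume x: "x \<in> carrier_vec (dim_row (kms_mat n \<rho>))"
    have xc: "x \<in> carrier_vec n" using x by simp
    show "nonneg_c (quad_form (kms_mat n \<rho>) x)"
      unfolding r quad_kms[OF xc] using quad_nonneg[OF r(2) N] by simp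
  qed
qed


lemma kms_prod_index:
  "i < n \<Longrightarrow> j < n \<Longrightarrow> (kms_mat n \<sigma> * kms_mat n \<tau>) $$ (i,j) = (\<Sum>k<n. \<sigma> ^ dd i k * \<tau> ^ dd k j)"
  by (simp add: scalar_prod_def atLeast0LessThan)

lemma kms2_comm: "kms_mat 2 \<sigma> * kms_mat 2 \<tau> = kms_mat 2 \<tau> * kms_mat 2 \<sigma>"
proof (rule eq_matI)
  fix i j assume ij: "i < dim_row (kms_mat 2 \<tau> * kms_mat 2 \<sigma>)" "j < dim_col (kms_mat 2 \<tau> * kms_mat 2 \<sigma>)"
  hence "i < 2" "j < 2" by auto
  hence i: "i = 0 \<or> i = 1" and j: "j = 0 \<or> j = 1" by auto
  have s: "(\<Sum>k<(2::nat). f k) = f 0 + (f 1 :: complex)" for f by (simp add: numeral_2_eq_2)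
  show "(kms_mat 2 \<sigma> * kms_mat 2 \<tau>) $$ (i, j) = (kms_mat 2 \<tau> * kms_mat 2 \<sigma>) $$ (i, j)"
    unfolding kms_prod_index[OF \<open>i < 2\<close> \<open>j < 2\<close>] s using i j by (auto simp: dd_def algebra_simps)
qed auto

lemma item7: assumes n: "2 \<le> n"
  shows "normal_mat (kms_mat n \<rho>) \<longleftrightarrow> \<rho> \<in> \<real> \<or> n = 2"
proof
  assume "\<rho> \<in> \<real> \<or> n = 2"
  thus "normal_mat (kms_mat n \<rho>)"
  proof
    assume "\<rho> \<in> \<real>"
    hence "cnj \<rho> = \<rho>" by (simp add: Reals_cnj_iff)
    thus ?thesis unfolding normal_mat_def adjoint_kms by simp
  next
    assume "n = 2"
    thus ?thesis unfolding normal_mat_def adjoint_kms using kms2_comm by simp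
  qed
next
  assume nm: "normal_mat (kms_mat n \<rho>)"
  show "\<rho> \<in> \<real> \<or> n = 2"
  proof (rule ccontr)
    assume "\<not> (\<rho> \<in> \<real> \<or> n = 2)"
    hence nr: "\<rho> \<notin> \<real>" and n3: "n \<noteq> 2" by auto
    define M where "M = n - 2"
    have M: "n = Suc (Suc M)" "M \<ge> 1" using n n3 unfolding M_def by auto
    define c where "c = cnj \<rho>"
    have rc: "\<rho> \<noteq> c" using nr unfolding c_def by (simp add: Reals_cnj_iff)
    have r0: "\<rho> \<noteq> 0" using nr by auto
    define g where "g = (\<lambda>k. \<rho> ^ dd 0 k * c ^ dd k 1 - c ^ dd 0 k * \<rho> ^ dd k 1)"
    have eq: "(kms_mat n \<rho> * kms_mat n c) $$ (0,1) = (kms_mat n c * kms_mat n \<rho>) $$ (0,1)"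
      using nm unfolding normal_mat_def adjoint_kms c_def by simp
    have n01: "0 < n" "1 < n" using n by auto
    have S0: "(\<Sum>k<n. g k) = 0"
      using eq unfolding g_def sum_subtractf kms_prod_index[OF n01] by simp
    have S1: "(\<Sum>k<n. g k) = g 0 + (g 1 + (\<Sum>k<M. g (Suc (Suc k))))"
      unfolding M(1) sum.lessThan_Suc_shift by simp
    have S2: "g 0 + g 1 = 0" unfolding g_def by (simp add: dd_def)
    have gk: "g (Suc (Suc k)) = (\<rho> * c) ^ Suc k * (\<rho> - c)" for k
      unfolding g_def by (simp add: dd_def power_mult_distrib algebra_simps)
    have rcn: "\<rho> * c = complex_of_real ((cmod \<rho>)^2)" unfolding c_def by (rule complex_norm_square[symmetric])
    define T where "T = (\<Sum>k<M. ((cmod \<rho>)^2) ^ Suc k)"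
    have G: "(\<Sum>k<M. g (Suc (Suc k))) = complex_of_real T * (\<rho> - c)"
    proof -
      have "(\<Sum>k<M. g (Suc (Suc k))) = (\<Sum>k<M. (\<rho> * c) ^ Suc k) * (\<rho> - c)"
        unfolding gk by (simp add: sum_distrib_right)
      also have "(\<Sum>k<M. (\<rho> * c) ^ Suc k) = complex_of_real T"
        unfolding T_def rcn of_real_sum by (simp only: of_real_power)
      finally show ?thesis .
    qed
    have "complex_of_real T * (\<rho> - c) = 0" using S0 S1 S2 G by (simp add: add.assoc[symmetric])
    moreover have "T > 0"
    proof -
      have "T \<ge> ((cmod \<rho>)^2) ^ Suc 0" unfolding T_def
        by (rule member_le_sum) (use M(2) in auto)
      moreover have "((cmod \<rho>)^2) ^ Suc 0 > 0" using r0 by simp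
      ultimately show ?thesis by linarith
    qed
    ultimately show False using rc by simp
  qed
qed


lemma sp_0: "symbol_partial \<rho> \<theta> 0 = 1"
  unfolding symbol_partial_def by simp

lemma sp_Suc: "symbol_partial \<rho> \<theta> (Suc N) = symbol_partial \<rho> \<theta> N +
   \<rho> ^ Suc N * (exp (\<i> * of_real \<theta>) ^ Suc N + exp (- (\<i> * of_real \<theta>)) ^ Suc N)"
proof -
  define f where "f = (\<lambda>k::int. \<rho> ^ nat \<bar>k\<bar> * exp (\<i> * of_int k * of_real \<theta>))"
  have set: "{- int (Suc N)..int (Suc N)} = insert (- int (Suc N)) (insert (int (Suc N)) {- int N..int N})"
    by auto
  have "symbol_partial \<rho> \<theta> (Suc N) = f (- int (Suc N)) + (f (int (Suc N)) + symbol_partial \<rho> \<theta> N)"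
    unfolding symbol_partial_def f_def[symmetric] set by (simp add: sum.insert)
  moreover have "f (int (Suc N)) = \<rho> ^ Suc N * exp (\<i> * of_real \<theta>) ^ Suc N"
  proof -
    have e1: "exp (\<i> * of_int (int (Suc N)) * of_real \<theta>) = exp (of_nat (Suc N) * (\<i> * of_real \<theta>))"
      by (simp add: ac_simps)
    have e2: "nat \<bar>int (Suc N)\<bar> = Suc N" by (simp only: abs_of_nat nat_int)
    show ?thesis unfolding f_def e1 e2 exp_of_nat_mult ..
  qed
  moreover have "f (- int (Suc N)) = \<rho> ^ Suc N * exp (- (\<i> * of_real \<theta>)) ^ Suc N"
  proof -
    have e1: "exp (\<i> * of_int (- int (Suc N)) * of_real \<theta>) = exp (of_nat (Suc N) * (- (\<i> * of_real \<theta>)))"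
      by (rule arg_cong[where f=exp]) (simp add: algebra_simps)
    have e2: "nat \<bar>- int (Suc N)\<bar> = Suc N" by (simp only: abs_minus_cancel abs_of_nat nat_int)
    show ?thesis unfolding f_def e1 e2 exp_of_nat_mult ..
  qed
  ultimately show ?thesis by (simp add: algebra_simps)
qed

lemma sp_formula: "symbol_partial \<rho> \<theta> N = 1 + (\<Sum>k<N. (\<rho> * exp (\<i> * of_real \<theta>)) ^ Suc k + (\<rho> * exp (- (\<i> * of_real \<theta>))) ^ Suc k)"
proof (induction N)
  case 0 thus ?case by (simp add: sp_0)
next
  case (Suc N)
  show ?case unfolding sp_Suc Suc.IH by (simp add: power_mult_distrib algebra_simps)
qed

lemma norm_w: "cmod (exp (\<i> * of_real \<theta>)) = 1" "cmod (exp (- (\<i> * of_real \<theta>))) = 1"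
  by (simp_all add: norm_exp_eq_Re)

lemma symbol_good:
  assumes r: "cmod \<rho> < 1"
  shows "symbol_well_defined_bounded \<rho>"
proof -
  define B where "B = 1 + 2 / (1 - cmod \<rho>)"
  have conv: "convergent (symbol_partial \<rho> \<theta>)" for \<theta>
  proof -
    define a where "a = (\<lambda>k. (\<rho> * exp (\<i> * of_real \<theta>)) ^ Suc k + (\<rho> * exp (- (\<i> * of_real \<theta>))) ^ Suc k)"
    have s1: "summable (\<lambda>k. (\<rho> * exp (\<i> * of_real \<theta>)) ^ Suc k)"
      unfolding summable_Suc_iff by (rule summable_geometric) (simp add: norm_mult norm_w r)
    have s2: "summable (\<lambda>k. (\<rho> * exp (- (\<i> * of_real \<theta>))) ^ Suc k)"
      unfolding summable_Suc_iff by (rule summable_geometric) (simp add: norm_mult norm_w r)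
    have "summable a" unfolding a_def by (rule summable_add[OF s1 s2])
    hence "(\<lambda>N. 1 + (\<Sum>k<N. a k)) \<longlonglongrightarrow> 1 + suminf a"
      by (intro tendsto_add tendsto_const summable_LIMSEQ)
    hence "symbol_partial \<rho> \<theta> \<longlonglongrightarrow> 1 + suminf a"
      unfolding sp_formula[abs_def] a_def by simp
    thus ?thesis unfolding convergent_def by blast
  qed
  have bnd: "cmod (symbol_partial \<rho> \<theta> N) \<le> B" for \<theta> N
  proof -
    have "cmod (symbol_partial \<rho> \<theta> N) \<le> 1 + (\<Sum>k<N. cmod ((\<rho> * exp (\<i> * of_real \<theta>)) ^ Suc k + (\<rho> * exp (- (\<i> * of_real \<theta>))) ^ Suc k))"
      unfolding sp_formula by (rule order_trans[OF norm_triangle_ineq]) (simp add: norm_sum)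
    also have "\<dots> \<le> 1 + (\<Sum>k<N. 2 * cmod \<rho> ^ k)"
    proof -
      have "cmod ((\<rho> * exp (\<i> * of_real \<theta>)) ^ Suc k + (\<rho> * exp (- (\<i> * of_real \<theta>))) ^ Suc k) \<le> 2 * cmod \<rho> ^ k" for k
      proof -
        have "cmod \<rho> ^ Suc k \<le> cmod \<rho> ^ k" using r by (simp add: mult_left_le_one_le)
        moreover have "cmod ((\<rho> * exp (\<i> * of_real \<theta>)) ^ Suc k + (\<rho> * exp (- (\<i> * of_real \<theta>))) ^ Suc k)
            \<le> cmod \<rho> ^ Suc k + cmod \<rho> ^ Suc k"
          by (rule order_trans[OF norm_triangle_ineq]) (simp add: norm_mult norm_power norm_w)
        ultimately show ?thesis by simp
      qed
      thus ?thesis by (intro add_left_mono sum_mono) auto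
    qed
    also have "(\<Sum>k<N. 2 * cmod \<rho> ^ k) \<le> 2 / (1 - cmod \<rho>)"
    proof -
      have "(\<Sum>k<N. cmod \<rho> ^ k) \<le> (\<Sum>k. cmod \<rho> ^ k)"
        by (rule sum_le_suminf) (use r in \<open>auto intro: summable_geometric\<close>)
      also have "\<dots> = 1 / (1 - cmod \<rho>)" using r by (simp add: suminf_geometric)
      finally show ?thesis by (simp add: sum_distrib_left[symmetric])
    qed
    finally show ?thesis unfolding B_def by simp
  qed
  have "cmod (lim (symbol_partial \<rho> \<theta>)) \<le> B" for \<theta>
  proof -
    have "symbol_partial \<rho> \<theta> \<longlonglongrightarrow> lim (symbol_partial \<rho> \<theta>)"
      using conv convergent_LIMSEQ_iff by blast
    hence "(\<lambda>N. cmod (symbol_partial \<rho> \<theta> N)) \<longlonglongrightarrow> cmod (lim (symbol_partial \<rho> \<theta>))"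
      by (rule tendsto_norm)
    thus ?thesis by (rule LIMSEQ_le_const2) (use bnd in auto)
  qed
  thus ?thesis unfolding symbol_well_defined_bounded_def using conv by blast
qed

lemma symbol_bad:
  assumes r: "cmod \<rho> \<ge> 1"
  shows "\<not> convergent (symbol_partial \<rho> 0)"
proof
  assume "convergent (symbol_partial \<rho> 0)"
  then obtain L where L: "symbol_partial \<rho> 0 \<longlonglongrightarrow> L" unfolding convergent_def by blast
  have d: "symbol_partial \<rho> 0 (Suc N) - symbol_partial \<rho> 0 N = 2 * \<rho> ^ Suc N" for N
    unfolding sp_Suc by simp
  have "(\<lambda>N. symbol_partial \<rho> 0 (Suc N) - symbol_partial \<rho> 0 N) \<longlonglongrightarrow> L - L"
    by (intro tendsto_diff L LIMSEQ_Suc)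
  hence "(\<lambda>N. 2 * \<rho> ^ Suc N) \<longlonglongrightarrow> 0" unfolding d by simp
  from LIMSEQ_D[OF this, of 1] obtain N0 where "\<forall>N\<ge>N0. cmod (2 * \<rho> ^ Suc N - 0) < 1"
    by auto
  hence "cmod (2 * \<rho> ^ Suc N0) < 1" by simp
  moreover have "cmod (2 * \<rho> ^ Suc N0) \<ge> 2"
  proof -
    have "cmod \<rho> ^ Suc N0 \<ge> 1" using r by (rule one_le_power)
    thus ?thesis by (simp add: norm_mult norm_power)
  qed
  ultimately show False by simp
qed

lemma item4: "symbol_well_defined_bounded \<rho> \<longleftrightarrow> cmod \<rho> < 1"
  using symbol_good symbol_bad unfolding symbol_well_defined_bounded_def by (meson not_le)


theorem theorem2p3:
  fixes n :: nat and \<rho> :: complex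
  assumes "n \<ge> 2"
  shows "(all_entries_positive (kms_mat n \<rho>) \<longleftrightarrow> pos_c \<rho>)
    \<and> (real_symmetric (kms_mat n \<rho>) \<longleftrightarrow> \<rho> \<in> \<real>)
    \<and> (hermitian (kms_mat n \<rho>) \<longleftrightarrow> \<rho> \<in> \<real>)
    \<and> (symbol_well_defined_bounded \<rho> \<longleftrightarrow> cmod \<rho> < 1)
    \<and> (positive_definite (kms_mat n \<rho>) \<longleftrightarrow> \<rho> \<in> \<real> \<and> -1 < Re \<rho> \<and> Re \<rho> < 1)
    \<and> (positive_semidefinite (kms_mat n \<rho>) \<longleftrightarrow> \<rho> \<in> \<real> \<and> -1 \<le> Re \<rho> \<and> Re \<rho> \<le> 1)
    \<and> (normal_mat (kms_mat n \<rho>) \<longleftrightarrow> \<rho> \<in> \<real> \<or> n = 2)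
    \<and> (greens_matrix (kms_mat n \<rho>) \<longleftrightarrow> \<rho> \<in> \<real> \<and> \<rho> \<noteq> 0)
    \<and> (totally_positive (kms_mat n \<rho>) \<longleftrightarrow> \<rho> \<in> \<real> \<and> 0 \<le> Re \<rho> \<and> Re \<rho> \<le> 1)
    \<and> (oscillatory (kms_mat n \<rho>) \<longleftrightarrow> \<rho> \<in> \<real> \<and> 0 < Re \<rho> \<and> Re \<rho> < 1)"
    by (intro conjI item1[OF assms] item2[OF assms] item3[OF assms] item4 item5[OF assms] item6[OF assms]
      item7[OF assms] item8[OF assms] item9[OF assms] item10[OF assms])

end
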